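(* Algorithm 1 (point-oriented Pareto computation) terminates for any $\varepsilon\geq 0$. Throughout the execution of Algorithm 1, the following properties hold: (i) $\mathbf{t}_{\uparrow}\in \mathscr{C}$. (ii) If $\mathbf{t}\in \mathscr{C}$ then $\mathbf{t}_{\downarrow} = \mathbf{t}$. (iii) $\|\mathbf{t}-\mathbf{t}_{\downarrow}\|\leq \min_{\mathbf{u}\in\mathscr{C}}\|\mathbf{t} -\mathbf{u}\|\leq \|\mathbf{t}-\mathbf{t}_{\uparrow}\|$.
   Context: Setting: agents $I$ and tasks $J$ with $|I|=|J|=n$; each agent $i$ is an MDP $\mathcal{M}_i$ with cost reward structure $\rho_i$, each task $j$ is a DFA $\mathcal{A}_j$ (accepting locations are sinks), and $\mathcal{M}_{i\otimes j}=\mathcal{M}_i[\rho_i]\otimes\mathcal{A}_j$ is the agent-task product MDP with atomic proposition $\mathtt{done}_j$ marking that the task has ended (accepted or trapped). For each $j$, $\rho_{j+n}$ is the reward giving a one-off unit reward when an accepting location is about to be entered for the first time. All $\mathcal{M}_{i\otimes j}[\rho_i]$ are assumed reward-finite w.r.t. reaching $\mathtt{done}_j$. Let $\mathscr{C}_0$ be the set of vectors $(\mathbf{E}^{\mathcal{M}^{\mathsf{ct}}[\rho_k],\mu})_{1\le k\le 2n}$ of expected rewards (until $\mathtt{done}$) over all schedulers $\mu$ of the centralised MDP $\mathcal{M}^{\mathsf{ct}}$ that combines all agent-task MDPs with randomised task assignment; $\mathscr{C}$ is the downward closure of $\mathscr{C}_0$, i.e. the set of feasible cost/probability threshold vectors.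 The norm is $\|\mathbf{v}\|^2=\mathbf{v}^T\mathbf{M}\mathbf{v}$ for a symmetric positive-definite matrix $\mathbf{M}$; $\|\cdot\|_1$ is the 1-norm; $\mathrm{down}(\Phi)$ is the downward closure of the convex hull of $\Phi$; $\mathbf{w}\cdot\boldsymbol{\rho}$ is the weighted combination of the reward structures $\rho_1,\dots,\rho_{2n}$. Algorithm 1, given a threshold vector $\mathbf{t}\in\mathbb{R}^{2n}$ (costs then probabilities) and $\varepsilon\ge 0$: initialise $\mathbf{t}_{\uparrow}:=-\boldsymbol{\infty}$, $\mathbf{t}_{\downarrow}:=\mathbf{t}$, $\Phi:=\emptyset$, $\Lambda:=\emptyset$, $\mathbf{w}:=(1,0,\ldots,0)$. While $\|\mathbf{t}_{\downarrow}-\mathbf{t}_{\uparrow}\|>\varepsilon$: if $\Phi\ne\emptyset$, set $\mathbf{t}_{\uparrow}$ to the point $\mathbf{x}\in\mathrm{down}(\Phi)$ minimising $\|\mathbf{t}-\mathbf{x}\|$ and $\mathbf{w}:=\mathbf{M}(\mathbf{t}-\mathbf{t}_{\uparrow})/\|\mathbf{M}(\mathbf{t}-\mathbf{t}_{\uparrow})\|_1$; compute $\mathbf{r}$ by Algorithm 2 (below); add $\mathbf{r}$ to $\Phi$ and $(\mathbf{w},\mathbf{r})$ to $\Lambda$; if $\mathbf{w}\cdot\mathbf{r}<\mathbf{w}\cdot\mathbf{t}_{\downarrow}$, set $\mathbf{t}_{\downarrow}$ to the $\mathbf{z}$ minimising $\|\mathbf{t}-\mathbf{z}\|$ subject to $\mathbf{w}'\cdot\mathbf{r}'\ge\mathbf{w}'\cdot\mathbf{z}$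 for all $(\mathbf{w}',\mathbf{r}')\in\Lambda$. Algorithm 2, given $\mathbf{w}$: for each $(i,j)$ compute a scheduler $\mu_{i,j}$ maximising $\mathbf{E}^{\mathcal{M}_{i\otimes j}[\mathbf{w}\cdot\boldsymbol{\rho}],\mu}$ and its value $c_{i,j}$; find a bijective assignment $f:J\to I$ maximising $\sum_j c_{f(j),j}$; for each $j$ set $r_{j+n}:=\mathbf{E}^{\mathcal{M}_{f(j)\otimes j}[\rho_{j+n}],\mu_{f(j),j}}$ and $r_{f(j)}:=\mathbf{E}^{\mathcal{M}_{f(j)\otimes j}[\rho_{f(j)}],\mu_{f(j),j}}$; return $\mathbf{r}=(r_k)_{k=1}^{2n}$. *)

theory Defs
  imports "HOL-Probability.Probability"
begin

record ('s,'a) mdp =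
  m_states :: "'s set"
  m_init   :: "'s"
  m_act    :: "'s \<Rightarrow> 'a set"
  m_trans  :: "'s \<Rightarrow> 'a \<Rightarrow> 's pmf"

definition wf_mdp :: "('s,'a) mdp \<Rightarrow> bool" where
  "wf_mdp M \<longleftrightarrow> finite (m_states M) \<and> m_init M \<in> m_states M \<and>
     (\<forall>s\<in>m_states M. m_act M s \<noteq> {} \<and> finite (m_act M s) \<and>
        (\<forall>a\<in>m_act M s. set_pmf (m_trans M s a) \<subseteq> m_states M))"

text \<open>A history is the initial state followed by the (action, successor) steps taken so far.\<close>
type_synonym ('s,'a) hist = "'s \<times> ('a \<times> 's) list"
type_synonym ('s,'a) sched = "('s,'a) hist \<Rightarrow> 'a pmf"

definition cur :: "('s,'a) hist \<Rightarrow> 's" where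
  "cur h = (if snd h = [] then fst h else snd (last (snd h)))"

definition valid_sched :: "('s,'a) mdp \<Rightarrow> ('s,'a) sched \<Rightarrow> bool" where
  "valid_sched M \<mu> \<longleftrightarrow> (\<forall>h. cur h \<in> m_states M \<longrightarrow> set_pmf (\<mu> h) \<subseteq> m_act M (cur h))"

definition memoryless_det :: "('s,'a) sched \<Rightarrow> bool" where
  "memoryless_det \<mu> \<longleftrightarrow> (\<exists>\<sigma>. \<forall>h. \<mu> h = return_pmf (\<sigma> (cur h)))"

primrec exp_rew_n :: "('s,'a) mdp \<Rightarrow> ('s \<Rightarrow> 'a \<Rightarrow> 's \<Rightarrow> real) \<Rightarrow> 's set \<Rightarrow>
    ('s,'a) sched \<Rightarrow> nat \<Rightarrow> ('s,'a) hist \<Rightarrow> real" where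
  "exp_rew_n M r T \<mu> 0 h = 0"
| "exp_rew_n M r T \<mu> (Suc n) h =
     (if cur h \<in> T then 0 else
       measure_pmf.expectation (\<mu> h) (\<lambda>a.
         measure_pmf.expectation (m_trans M (cur h) a) (\<lambda>s'.
           r (cur h) a s' + exp_rew_n M r T \<mu> n (fst h, snd h @ [(a, s')]))))"

definition exp_rew :: "('s,'a) mdp \<Rightarrow> ('s \<Rightarrow> 'a \<Rightarrow> 's \<Rightarrow> real) \<Rightarrow> 's set \<Rightarrow>
    ('s,'a) sched \<Rightarrow> real" where
  "exp_rew M r T \<mu> = lim (\<lambda>n. exp_rew_n M r T \<mu> n (m_init M, []))"

record ('q,'l) dfa =
  d_states :: "'q set"
  d_init   :: "'q"
  d_delta  :: "'q \<Rightarrow> 'l \<Rightarrow> 'q"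
  d_acc    :: "'q set"

definition wf_dfa :: "('q,'l) dfa \<Rightarrow> bool" where
  "wf_dfa D \<longleftrightarrow> finite (d_states D) \<and> d_init D \<in> d_states D \<and>
     (\<forall>q\<in>d_states D. \<forall>l. d_delta D q l \<in> d_states D) \<and> d_acc D \<subseteq> d_states D \<and>
     (\<forall>q\<in>d_acc D. \<forall>l. d_delta D q l = q)"

definition trapped :: "('q,'l) dfa \<Rightarrow> 'q \<Rightarrow> bool" where
  "trapped D q \<longleftrightarrow> \<not> (\<exists>w. foldl (d_delta D) q w \<in> d_acc D)"

definition prod_mdp :: "('s,'a) mdp \<Rightarrow> ('s \<Rightarrow> 'l) \<Rightarrow> ('q,'l) dfa \<Rightarrow> ('s \<times> 'q, 'a) mdp" where
  "prod_mdp M lab D = \<lparr> m_states = m_states M \<times> d_states D,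
      m_init = (m_init M, d_init D),
      m_act = (\<lambda>(s,q). m_act M s),
      m_trans = (\<lambda>(s,q) a. map_pmf (\<lambda>s'. (s', d_delta D q (lab s'))) (m_trans M s a)) \<rparr>"

section \<open>The multi-agent instance: agents and tasks both indexed by the finite type 'n\<close>

record ('n,'s,'a,'q,'l) inst =
  ag   :: "'n \<Rightarrow> ('s,'a) mdp"
  lab  :: "'n \<Rightarrow> 's \<Rightarrow> 'l"
  cost :: "'n \<Rightarrow> 's \<Rightarrow> 'a \<Rightarrow> real"
  task :: "'n \<Rightarrow> ('q,'l) dfa"

definition pmdp :: "('n,'s,'a,'q,'l) inst \<Rightarrow> 'n \<Rightarrow> 'n \<Rightarrow> ('s \<times> 'q, 'a) mdp" where
  "pmdp X i j = prod_mdp (ag X i) (lab X i) (task X j)"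

definition pdone :: "('n,'s,'a,'q,'l) inst \<Rightarrow> 'n \<Rightarrow> ('s \<times> 'q) set" where
  "pdone X j = {(s,q). q \<in> d_acc (task X j) \<or> trapped (task X j) q}"

text \<open>Reward structures rho_k on M_{i x j}, indexed by k :: 'n + 'n:
  Inl i' = cost of agent i' (rho_1..rho_n), Inr j' = acceptance reward of task j'
  (rho_{n+1}..rho_{2n}).\<close>
definition prew :: "('n,'s,'a,'q,'l) inst \<Rightarrow> 'n \<Rightarrow> 'n \<Rightarrow> 'n + 'n \<Rightarrow>
    ('s \<times> 'q) \<Rightarrow> 'a \<Rightarrow> ('s \<times> 'q) \<Rightarrow> real" where
  "prew X i j k x a y = (case k of
      Inl i' \<Rightarrow> (if i' = i then cost X i (fst x) a else 0)
    | Inr j' \<Rightarrow> (if j' = j \<and> snd x \<notin> d_acc (task X j) \<and> snd y \<in> d_acc (task X j)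
                 then 1 else 0))"

definition pval :: "('n,'s,'a,'q,'l) inst \<Rightarrow> 'n \<Rightarrow> 'n \<Rightarrow> ('s \<times> 'q, 'a) sched \<Rightarrow> 'n + 'n \<Rightarrow> real" where
  "pval X i j \<mu> k = exp_rew (pmdp X i j) (prew X i j k) (pdone X j) \<mu>"

definition wval :: "('n::finite,'s,'a,'q,'l) inst \<Rightarrow> 'n \<Rightarrow> 'n \<Rightarrow> real^('n+'n) \<Rightarrow>
    ('s \<times> 'q, 'a) sched \<Rightarrow> real" where
  "wval X i j w \<mu> = exp_rew (pmdp X i j)
      (\<lambda>x a y. \<Sum>k\<in>UNIV. w $ k * prew X i j k x a y) (pdone X j) \<mu>"

text \<open>Achievable vectors of the centralised MDP: a random bijective assignment
  f : tasks -> agents, then for each pair a scheduler of the agent-task product.\<close>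
definition C0 :: "('n::finite,'s,'a,'q,'l) inst \<Rightarrow> (real^('n+'n)) set" where
  "C0 X = {(\<chi> k. measure_pmf.expectation p (\<lambda>f. case k of
              Inl i \<Rightarrow> pval X i (inv f i) (\<sigma> f i (inv f i)) (Inl i)
            | Inr j \<Rightarrow> pval X (f j) j (\<sigma> f (f j) j) (Inr j))) |
      p \<sigma>. (\<forall>f\<in>set_pmf p. bij f) \<and> (\<forall>f i j. valid_sched (pmdp X i j) (\<sigma> f i j))}"

definition Cset :: "('n::finite,'s,'a,'q,'l) inst \<Rightarrow> (real^('n+'n)) set" where
  "Cset X = {u. \<exists>x\<in>C0 X. \<forall>k. u $ k \<le> x $ k}"

definition alg2 :: "('n::finite,'s,'a,'q,'l) inst \<Rightarrow> real^('n+'n) \<Rightarrow> (real^('n+'n)) set" where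
  "alg2 X w = {r. \<exists>\<mu> f.
      (\<forall>i j. valid_sched (pmdp X i j) (\<mu> i j) \<and> memoryless_det (\<mu> i j) \<and>
         (\<forall>\<mu>'. valid_sched (pmdp X i j) \<mu>' \<longrightarrow> wval X i j w \<mu>' \<le> wval X i j w (\<mu> i j))) \<and>
      bij f \<and>
      (\<forall>g. bij g \<longrightarrow> (\<Sum>j\<in>UNIV. wval X (g j) j w (\<mu> (g j) j))
                     \<le> (\<Sum>j\<in>UNIV. wval X (f j) j w (\<mu> (f j) j))) \<and>
      r = (\<chi> k. case k of
              Inl i \<Rightarrow> pval X i (inv f i) (\<mu> i (inv f i)) (Inl i)
            | Inr j \<Rightarrow> pval X (f j) j (\<mu> (f j) j) (Inr j))}"

definition normM :: "real^'k^'k \<Rightarrow> real^'k \<Rightarrow> real" where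
  "normM Mm v = sqrt (v \<bullet> (Mm *v v))"

definition norm1 :: "real^'k \<Rightarrow> real" where
  "norm1 v = (\<Sum>k\<in>UNIV. \<bar>v $ k\<bar>)"

definition downc :: "(real^'k) set \<Rightarrow> (real^'k) set" where
  "downc \<Phi> = {u. \<exists>x\<in>convex hull \<Phi>. \<forall>k. u $ k \<le> x $ k}"

text \<open>State of Algorithm 1; t_up = None encodes the initial value -infinity.\<close>
record ('k::finite) astate =
  tup   :: "(real^'k) option"
  tdown :: "real^'k"
  phi   :: "(real^'k) set"
  lam   :: "((real^'k) \<times> (real^'k)) set"
  wt    :: "real^'k"

definition alg1_init :: "'n::finite \<Rightarrow> real^('n+'n) \<Rightarrow> ('n+'n) astate" where
  "alg1_init i0 t = \<lparr> tup = None, tdown = t, phi = {}, lam = {},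
      wt = (\<chi> k. if k = Inl i0 then 1 else 0) \<rparr>"

definition alg1_guard :: "real^'k^'k \<Rightarrow> real \<Rightarrow> 'k astate \<Rightarrow> bool" where
  "alg1_guard Mm eps S = (case tup S of None \<Rightarrow> True
                          | Some u \<Rightarrow> normM Mm (tdown S - u) > eps)"

text \<open>One iteration of the while loop (nondeterministic in the choices made by Algorithm 2).\<close>
definition alg1_step :: "('n::finite,'s,'a,'q,'l) inst \<Rightarrow> real^('n+'n)^('n+'n) \<Rightarrow> real^('n+'n)
    \<Rightarrow> real \<Rightarrow> ('n+'n) astate \<Rightarrow> ('n+'n) astate \<Rightarrow> bool" where
  "alg1_step X Mm t eps S S' \<longleftrightarrow> alg1_guard Mm eps S \<and>
    (\<exists>u w r z.
       (if phi S = {} then u = tup S \<and> w = wt S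
        else (\<exists>x. x \<in> downc (phi S) \<and>
                  (\<forall>y\<in>downc (phi S). normM Mm (t - x) \<le> normM Mm (t - y)) \<and>
                  u = Some x \<and>
                  w = (1 / norm1 (Mm *v (t - x))) *\<^sub>R (Mm *v (t - x)))) \<and>
       r \<in> alg2 X w \<and>
       (if w \<bullet> r < w \<bullet> tdown S
        then (\<forall>(w',r')\<in>insert (w,r) (lam S). w' \<bullet> z \<le> w' \<bullet> r') \<and>
             (\<forall>z'. (\<forall>(w',r')\<in>insert (w,r) (lam S). w' \<bullet> z' \<le> w' \<bullet> r') \<longrightarrow>
                   normM Mm (t - z) \<le> normM Mm (t - z'))
        else z = tdown S) \<and>
       S' = \<lparr> tup = u, tdown = z, phi = insert r (phi S), lam = insert (w,r) (lam S), wt = w \<rparr>)"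

end

theory Submission
  imports Defs
begin

definition dsum :: "'a set \<Rightarrow> 's set \<Rightarrow> ('a \<Rightarrow> real) \<Rightarrow> ('a \<Rightarrow> 's \<Rightarrow> real) \<Rightarrow> ('a \<Rightarrow> 's \<Rightarrow> real) \<Rightarrow> real" where
  "dsum A B p q g = (\<Sum>a\<in>A. p a * (\<Sum>s\<in>B. q a s * g a s))"

lemma dsum_add: "dsum A B p q (\<lambda>a s. g a s + g' a s) = dsum A B p q g + dsum A B p q g'"
  by (simp add: dsum_def distrib_left sum.distrib)

lemma dsum_cmult: "dsum A B p q (\<lambda>a s. c * g a s) = c * dsum A B p q g"
  by (simp add: dsum_def sum_distrib_left mult.left_commute)

lemma dsum_sum: "dsum A B p q (\<lambda>a s. \<Sum>k\<in>K. g k a s) = (\<Sum>k\<in>K. dsum A B p q (g k))"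
proof -
  have "dsum A B p q (\<lambda>a s. \<Sum>k\<in>K. g k a s) = (\<Sum>a\<in>A. \<Sum>k\<in>K. p a * (\<Sum>s\<in>B. q a s * g k a s))"
    unfolding dsum_def by (simp add: sum_distrib_left sum.swap[of _ B K])
  also have "\<dots> = (\<Sum>k\<in>K. dsum A B p q (g k))"
    unfolding dsum_def by (rule sum.swap)
  finally show ?thesis .
qed

lemma dsum_cong: "(\<And>a s. a \<in> A \<Longrightarrow> s \<in> B \<Longrightarrow> g a s = g' a s) \<Longrightarrow> dsum A B p q g = dsum A B p q g'"
  unfolding dsum_def by (auto intro!: sum.cong)

lemma dsum_mono: "(\<And>a. a \<in> A \<Longrightarrow> p a \<ge> 0) \<Longrightarrow> (\<And>a s. a \<in> A \<Longrightarrow> s \<in> B \<Longrightarrow> q a s \<ge> 0) \<Longrightarrow>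
   (\<And>a s. a \<in> A \<Longrightarrow> s \<in> B \<Longrightarrow> g a s \<le> g' a s) \<Longrightarrow> dsum A B p q g \<le> dsum A B p q g'"
  unfolding dsum_def by (auto intro!: sum_mono mult_left_mono)

lemma dsum_const: "sum p A = 1 \<Longrightarrow> (\<And>a. a \<in> A \<Longrightarrow> sum (q a) B = 1) \<Longrightarrow> dsum A B p q (\<lambda>a s. c) = c"
proof -
  assume 1: "sum p A = 1" and 2: "\<And>a. a \<in> A \<Longrightarrow> sum (q a) B = 1"
  have "dsum A B p q (\<lambda>a s. c) = (\<Sum>a\<in>A. p a * c)"
    unfolding dsum_def by (auto intro!: sum.cong simp: sum_distrib_right[symmetric] 2)
  also have "\<dots> = c" using 1 by (simp add: sum_distrib_right[symmetric])
  finally show ?thesis .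
qed

lemma dsum_outer: "dsum A B p q g = (\<Sum>a\<in>A. p a * dsum {a} B (\<lambda>_. 1) q g)"
  unfolding dsum_def by simp

lemma exp_as_sum: "finite A \<Longrightarrow> set_pmf p \<subseteq> A \<Longrightarrow> measure_pmf.expectation p f = (\<Sum>a\<in>A. pmf p a * f a)"
  by (subst integral_measure_pmf_real[of A]) (auto simp: mult.commute)

lemma cur_snoc[simp]: "cur (x, ys @ [p]) = snd p"
  by (simp add: cur_def)

locale fmdp =
  fixes M :: "('s,'a) mdp"
  assumes wf: "wf_mdp M"
begin

abbreviation "St \<equiv> m_states M"
abbreviation "Act \<equiv> m_act M"
abbreviation "Tr \<equiv> m_trans M"

lemma St_fin[simp]: "finite St" using wf by (simp add: wf_mdp_def)
lemma init_St[simp]: "m_init M \<in> St" using wf by (simp add: wf_mdp_def)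
lemma Act_fin[simp]: "s \<in> St \<Longrightarrow> finite (Act s)" using wf by (simp add: wf_mdp_def)
lemma Act_ne: "s \<in> St \<Longrightarrow> Act s \<noteq> {}" using wf by (simp add: wf_mdp_def)
lemma Tr_St: "s \<in> St \<Longrightarrow> a \<in> Act s \<Longrightarrow> set_pmf (Tr s a) \<subseteq> St" using wf by (simp add: wf_mdp_def)
lemma sum_Tr: "s \<in> St \<Longrightarrow> a \<in> Act s \<Longrightarrow> (\<Sum>s'\<in>St. pmf (Tr s a) s') = 1"
  by (rule sum_pmf_eq_1) (auto dest: Tr_St)
lemma sched_sub: "valid_sched M \<mu> \<Longrightarrow> cur h \<in> St \<Longrightarrow> set_pmf (\<mu> h) \<subseteq> Act (cur h)"
  unfolding valid_sched_def by blast
lemma sum_sched: "valid_sched M \<mu> \<Longrightarrow> cur h \<in> St \<Longrightarrow> (\<Sum>a\<in>Act (cur h). pmf (\<mu> h) a) = 1"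
  by (rule sum_pmf_eq_1) (auto dest: sched_sub)

definition "Op \<mu> h g = dsum (Act (cur h)) St (pmf (\<mu> h)) (\<lambda>a s'. pmf (Tr (cur h) a) s') g"

lemma Op_const: "valid_sched M \<mu> \<Longrightarrow> cur h \<in> St \<Longrightarrow> Op \<mu> h (\<lambda>a s. c) = c"
  unfolding Op_def by (rule dsum_const) (auto simp: sum_sched sum_Tr)

lemma Op_mono: "(\<And>a s. a \<in> Act (cur h) \<Longrightarrow> s \<in> St \<Longrightarrow> g a s \<le> g' a s) \<Longrightarrow> Op \<mu> h g \<le> Op \<mu> h g'"
  unfolding Op_def by (rule dsum_mono) auto

lemma Op_cong: "(\<And>a s. a \<in> Act (cur h) \<Longrightarrow> s \<in> St \<Longrightarrow> g a s = g' a s) \<Longrightarrow> Op \<mu> h g = Op \<mu> h g'"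
  unfolding Op_def by (rule dsum_cong) auto

lemma Op_add: "Op \<mu> h (\<lambda>a s. g a s + g' a s) = Op \<mu> h g + Op \<mu> h g'"
  unfolding Op_def by (rule dsum_add)
lemma Op_cmult: "Op \<mu> h (\<lambda>a s. c * g a s) = c * Op \<mu> h g"
  unfolding Op_def by (rule dsum_cmult)
lemma Op_sum: "Op \<mu> h (\<lambda>a s. \<Sum>k\<in>K. g k a s) = (\<Sum>k\<in>K. Op \<mu> h (g k))"
  unfolding Op_def by (rule dsum_sum)
lemma Op_diff: "Op \<mu> h (\<lambda>a s. g a s - g' a s) = Op \<mu> h g - Op \<mu> h g'"
  using Op_add[of \<mu> h g "\<lambda>a s. - g' a s"] Op_cmult[of \<mu> h "-1" g'] by simp

abbreviation (input) "hx h a s \<equiv> (fst h, snd h @ [(a, s)])"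

lemma ER_step:
  assumes "valid_sched M \<mu>" "cur h \<in> St"
  shows "exp_rew_n M r T \<mu> (Suc n) h =
    (if cur h \<in> T then 0 else Op \<mu> h (\<lambda>a s'. r (cur h) a s' + exp_rew_n M r T \<mu> n (hx h a s')))"
proof (cases "cur h \<in> T")
  case False
  have sA: "set_pmf (\<mu> h) \<subseteq> Act (cur h)" using assms by (rule sched_sub)
  show ?thesis using False
    apply (simp add: Op_def dsum_def)
    apply (subst exp_as_sum[OF _ sA])
     apply (simp add: assms)
    apply (rule sum.cong, simp)
    apply (subst exp_as_sum[OF _ Tr_St])
    using assms by auto
qed simp

lemma ER_T: "cur h \<in> T \<Longrightarrow> exp_rew_n M r T \<mu> n h = 0"
  by (cases n) auto

lemma ER_lin:
  assumes "valid_sched M \<mu>" "cur h \<in> St"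
  shows "exp_rew_n M (\<lambda>x a y. \<Sum>k\<in>K. c k * rr k x a y) T \<mu> n h = (\<Sum>k\<in>K. c k * exp_rew_n M (rr k) T \<mu> n h)"
  using assms(2)
proof (induction n arbitrary: h)
  case 0 then show ?case by simp
next
  case (Suc n)
  show ?case
  proof (cases "cur h \<in> T")
    case True then show ?thesis by (simp add: ER_T)
  next
    case False
    have "exp_rew_n M (\<lambda>x a y. \<Sum>k\<in>K. c k * rr k x a y) T \<mu> (Suc n) h =
      Op \<mu> h (\<lambda>a s'. \<Sum>k\<in>K. c k * (rr k (cur h) a s' + exp_rew_n M (rr k) T \<mu> n (hx h a s')))"
      using False Suc.prems
      apply (simp only: ER_step[OF assms(1) Suc.prems] if_False)
      by (auto simp: Suc.IH sum.distrib distrib_left intro!: Op_cong dest: Tr_St)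
    also have "\<dots> = (\<Sum>k\<in>K. c k * exp_rew_n M (rr k) T \<mu> (Suc n) h)"
      using False Suc.prems by (simp only: Op_sum Op_cmult ER_step[OF assms(1) Suc.prems] if_False)
    finally show ?thesis .
  qed
qed

lemma ER_zero:
  assumes "valid_sched M \<mu>" "cur h \<in> St" "\<And>x a y. r x a y = 0"
  shows "exp_rew_n M r T \<mu> n h = 0"
  using assms(2)
proof (induction n arbitrary: h)
  case (Suc n)
  show ?case
  proof (cases "cur h \<in> T")
    case False
    then show ?thesis
    proof -
      have "Op \<mu> h (\<lambda>a s'. r (cur h) a s' + exp_rew_n M r T \<mu> n (hx h a s')) = Op \<mu> h (\<lambda>a s. 0)"
        by (rule Op_cong) (simp add: assms(3) Suc.IH)
      then show ?thesis using False Op_const[OF assms(1) Suc.prems, of 0]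
        by (simp only: ER_step[OF assms(1) Suc.prems] if_False)
    qed
  qed (simp add: ER_T)
qed simp

lemma Op_nonneg: "valid_sched M \<mu> \<Longrightarrow> cur h \<in> St \<Longrightarrow> (\<And>a s. a \<in> Act (cur h) \<Longrightarrow> s \<in> St \<Longrightarrow> 0 \<le> g a s) \<Longrightarrow> 0 \<le> Op \<mu> h g"
  using Op_mono[of h "\<lambda>a s. 0" g \<mu>] Op_const[of \<mu> h 0] by simp

lemma ER_nonneg_mono:
  assumes "valid_sched M \<mu>" "cur h \<in> St" "\<And>x a y. r x a y \<ge> 0"
  shows "0 \<le> exp_rew_n M r T \<mu> n h \<and> exp_rew_n M r T \<mu> n h \<le> exp_rew_n M r T \<mu> (Suc n) h"
  using assms(2)
proof (induction n arbitrary: h)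
  case 0
  have "0 \<le> Op \<mu> h (\<lambda>a s'. r (cur h) a s' + exp_rew_n M r T \<mu> 0 (hx h a s'))"
    by (rule Op_nonneg[OF assms(1) 0]) (simp add: assms(3))
  then show ?case 
    by (simp only: ER_step[OF assms(1) 0]) simp
next
  case (Suc n)
  show ?case
  proof (cases "cur h \<in> T")
    case False
    have "0 \<le> Op \<mu> h (\<lambda>a s'. r (cur h) a s' + exp_rew_n M r T \<mu> n (hx h a s'))"
      by (rule Op_nonneg[OF assms(1) Suc.prems]) (simp add: assms(3) Suc.IH add_nonneg_nonneg)
    moreover have "Op \<mu> h (\<lambda>a s'. r (cur h) a s' + exp_rew_n M r T \<mu> n (hx h a s'))
       \<le> Op \<mu> h (\<lambda>a s'. r (cur h) a s' + exp_rew_n M r T \<mu> (Suc n) (hx h a s'))"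
      by (rule Op_mono) (simp del: exp_rew_n.simps add: Suc.IH)
    ultimately show ?thesis using False
      by (simp only: ER_step[OF assms(1) Suc.prems] if_False; simp)
  qed (simp add: ER_T)
qed

lemma ER_cong_sched:
  assumes "valid_sched M \<mu>" "valid_sched M \<mu>'" "\<And>h. cur h \<in> St \<Longrightarrow> \<mu> h = \<mu>' h" "cur h \<in> St"
  shows "exp_rew_n M r T \<mu> n h = exp_rew_n M r T \<mu>' n h"
  using assms(4)
proof (induction n arbitrary: h)
  case (Suc n)
  then show ?case using assms
    apply (simp only: ER_step[OF assms(1) Suc.prems] ER_step[OF assms(2) Suc.prems])
    by (auto simp: Op_def intro!: dsum_cong dest: Tr_St)
qed simp

end

lemma pow_bound:
  fixes x K b :: real
  assumes "\<And>n. x \<le> K * b ^ n" "0 \<le> b" "b < 1"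
  shows "x \<le> 0"
proof -
  have "(\<lambda>n. K * b ^ n) \<longlonglongrightarrow> K * 0"
    by (intro tendsto_mult tendsto_const LIMSEQ_power_zero) (use assms in auto)
  then show ?thesis using assms(1) by (intro LIMSEQ_le_const[of "\<lambda>n. K * b ^ n"]) auto
qed

lemma pow_mult_le: "0 \<le> b \<Longrightarrow> b \<le> 1 \<Longrightarrow> 0 \<le> B \<Longrightarrow> b ^ k * B \<le> (B::real)"
  by (rule mult_left_le_one_le) (auto intro: power_le_one)

lemma geom_sum: "(1 - b) * (\<Sum>k<n. b ^ k) = 1 - (b::real) ^ n"
proof (induction n)
  case (Suc n)
  have "(1-b) * (\<Sum>k<Suc n. b^k) = (1-b)*(\<Sum>k<n. b^k) + (1-b)*b^n" by (simp add: distrib_left)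
  also have "\<dots> = 1 - b^n + (1-b)*b^n" using Suc by simp
  also have "\<dots> = 1 - b^Suc n" by (simp add: algebra_simps)
  finally show ?case .
qed simp

lemma abel_identity:
  fixes S :: "nat \<Rightarrow> real"
  assumes "S 0 = 0"
  shows "(\<Sum>k<n. b ^ k * (S (Suc k) - S k)) - L = (1 - b) * (\<Sum>k<n. b ^ k * (S (Suc k) - L)) + b ^ n * (S n - L)"
  by (induction n) (auto simp: assms algebra_simps)

lemma abel_fin:
  fixes S :: "nat \<Rightarrow> real"
  assumes S0: "S 0 = 0" and lim: "S \<longlonglongrightarrow> L" and e: "e > 0"
  shows "\<exists>K. \<forall>b n. 0 \<le> b \<longrightarrow> b < 1 \<longrightarrow>
      \<bar>(\<Sum>k<n. b ^ k * (S (Suc k) - S k)) - L\<bar> \<le> e + (1 - b) * K + b ^ n * K"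
proof -
  obtain N where N: "\<And>m. m \<ge> N \<Longrightarrow> \<bar>S m - L\<bar> < e"
    using LIMSEQ_D[OF lim e] by (auto simp: dist_real_def)
  define B where "B = (\<Sum>m<N. \<bar>S m - L\<bar>) + e"
  have B: "\<bar>S m - L\<bar> \<le> B" for m
  proof (cases "m < N")
    case True
    have "\<bar>S m - L\<bar> \<le> (\<Sum>m<N. \<bar>S m - L\<bar>)"
      using True by (intro member_le_sum) auto
    then show ?thesis using e by (simp add: B_def)
  next
    case False
    have "0 \<le> (\<Sum>m<N. \<bar>S m - L\<bar>)" by (rule sum_nonneg) simp
    then show ?thesis using N[of m] e False unfolding B_def by linarith
  qed
  have B0: "B \<ge> 0" using B[of 0] by linarith
  show ?thesis
  proof (intro exI allI impI)
    fix b :: real and n assume b: "0 \<le> b" "b < 1"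
    have t: "\<bar>S (Suc k) - L\<bar> \<le> e + (if k < N then B else 0)" for k
      using B[of "Suc k"] N[of "Suc k"] e B0 by (cases "k < N") auto
    have "\<bar>(\<Sum>k<n. b ^ k * (S (Suc k) - L))\<bar> \<le> (\<Sum>k<n. b ^ k * \<bar>S (Suc k) - L\<bar>)"
      by (rule order_trans[OF sum_abs]) (simp add: abs_mult b)
    also have "\<dots> \<le> (\<Sum>k<n. b ^ k * e + b ^ k * (if k < N then B else 0))"
      unfolding distrib_left[symmetric] by (intro sum_mono mult_left_mono) (use t b in auto)
    also have "\<dots> = e * (\<Sum>k<n. b ^ k) + (\<Sum>k<n. b ^ k * (if k < N then B else 0))"
      by (simp add: sum.distrib sum_distrib_left mult.commute)
    also have "(\<Sum>k<n. b ^ k * (if k < N then B else 0)) \<le> (\<Sum>k<n. (if k < N then B else 0))"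
      using b B0 by (intro sum_mono) (auto intro: pow_mult_le)
    also have "(\<Sum>k<n. (if k < N then B else 0)) \<le> (\<Sum>k<N. B)"
    proof -
      have "(\<Sum>k<n. (if k < N then B else 0)) = (\<Sum>k\<in>{..<n} \<inter> {..<N}. B)"
        by (simp add: sum.If_cases Int_def)
      also have "\<dots> \<le> (\<Sum>k<N. B)" using B0 by (intro sum_mono2) auto
      finally show ?thesis .
    qed
    finally have 1: "\<bar>(\<Sum>k<n. b ^ k * (S (Suc k) - L))\<bar> \<le> e * (\<Sum>k<n. b ^ k) + N * B" by simp
    have "\<bar>(\<Sum>k<n. b ^ k * (S (Suc k) - S k)) - L\<bar> \<le> (1 - b) * \<bar>(\<Sum>k<n. b ^ k * (S (Suc k) - L))\<bar> + b ^ n * \<bar>S n - L\<bar>"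
      unfolding abel_identity[of S, OF S0] using b by (rule_tac abs_triangle_ineq[THEN order_trans]) (simp add: abs_mult)
    also have "\<dots> \<le> (1 - b) * (e * (\<Sum>k<n. b ^ k) + N * B) + b ^ n * B"
      using b by (intro add_mono mult_left_mono 1 B) auto
    also have "\<dots> = e * ((1 - b) * (\<Sum>k<n. b ^ k)) + (1 - b) * (N * B) + b ^ n * B"
      by (simp add: algebra_simps)
    also have "\<dots> = e * (1 - b ^ n) + (1 - b) * (N * B) + b ^ n * B"
      by (simp only: geom_sum)
    also have "\<dots> \<le> e + (1 - b) * (N * B + B) + b ^ n * (N * B + B)"
    proof -
      have "0 \<le> e*b^n" "0 \<le> (1-b)*B" "0 \<le> b^n*(N*B)" using b B0 e by simp_all
      moreover have "e + (1 - b) * (N * B + B) + b ^ n * (N * B + B) = 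
         (e * (1 - b ^ n) + (1 - b) * (N * B) + b ^ n * B) + (e*b^n + (1-b)*B + b^n*(N*B))"
        by (simp add: algebra_simps)
      ultimately show ?thesis by linarith
    qed
    finally show "\<bar>(\<Sum>k<n. b ^ k * (S (Suc k) - S k)) - L\<bar> \<le> e + (1 - b) * (N * B + B) + b ^ n * (N * B + B)" .
  qed
qed


definition msched :: "('s \<Rightarrow> 'a) \<Rightarrow> ('s,'a) sched" where
  "msched \<sigma> = (\<lambda>h. return_pmf (\<sigma> (cur h)))"

lemma cur_init[simp]: "cur (x, []) = x" by (simp add: cur_def)

context fmdp
begin

primrec disc :: "('s \<Rightarrow> 'a \<Rightarrow> 's \<Rightarrow> real) \<Rightarrow> 's set \<Rightarrow> real \<Rightarrow> ('s,'a) sched \<Rightarrow> nat \<Rightarrow> ('s,'a) hist \<Rightarrow> real" where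
  "disc r T b \<mu> 0 h = 0"
| "disc r T b \<mu> (Suc n) h = (if cur h \<in> T then 0 else
     Op \<mu> h (\<lambda>a s'. r (cur h) a s' + b * disc r T b \<mu> n (hx h a s')))"

lemma disc_eq:
  assumes v: "valid_sched M \<mu>"
  shows "cur h \<in> St \<Longrightarrow> disc r T b \<mu> n h = (\<Sum>k<n. b ^ k * (exp_rew_n M r T \<mu> (Suc k) h - exp_rew_n M r T \<mu> k h))"
proof (induction n arbitrary: h)
  case 0 then show ?case by simp
next
  case (Suc n)
  show ?case
  proof (cases "cur h \<in> T")
    case True then show ?thesis by (simp add: ER_T[OF True] del: exp_rew_n.simps(2))
  next
    case False
    define R where "R = Op \<mu> h (\<lambda>a s. r (cur h) a s)"
    define G where "G k = Op \<mu> h (\<lambda>a s. exp_rew_n M r T \<mu> k (hx h a s))" for k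
    have ES: "exp_rew_n M r T \<mu> (Suc k) h = R + G k" for k
      using False by (simp only: ER_step[OF v Suc.prems] if_False Op_add R_def G_def)
    have G0: "G 0 = 0" unfolding G_def using Op_cmult[of \<mu> h 0 "\<lambda>a s. 0"] by simp
    have "disc r T b \<mu> (Suc n) h = Op \<mu> h (\<lambda>a s. r (cur h) a s + b * (\<Sum>k<n. b ^ k *
           (exp_rew_n M r T \<mu> (Suc k) (hx h a s) - exp_rew_n M r T \<mu> k (hx h a s))))"
      using False by (simp del: exp_rew_n.simps) (rule Op_cong, simp add: Suc.IH del: exp_rew_n.simps)
    also have "\<dots> = R + b * (\<Sum>k<n. b ^ k * (G (Suc k) - G k))"
      by (simp only: Op_add Op_cmult Op_sum Op_diff R_def G_def)
    also have "\<dots> = (\<Sum>k<Suc n. b ^ k * (exp_rew_n M r T \<mu> (Suc k) h - exp_rew_n M r T \<mu> k h))"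
      unfolding sum.lessThan_Suc_shift by (simp add: ES G0 sum_distrib_left mult.assoc del: exp_rew_n.simps(2))
    finally show ?thesis .
  qed
qed

lemma valid_msched: "(\<And>s. s \<in> St \<Longrightarrow> \<sigma> s \<in> Act s) \<Longrightarrow> valid_sched M (msched \<sigma>)"
  by (auto simp: valid_sched_def msched_def)

lemma Op_msched:
  assumes "\<sigma> (cur h) \<in> Act (cur h)" "cur h \<in> St"
  shows "Op (msched \<sigma>) h g = (\<Sum>s'\<in>St. pmf (Tr (cur h) (\<sigma> (cur h))) s' * g (\<sigma> (cur h)) s')"
proof -
  have "Op (msched \<sigma>) h g = (\<Sum>a\<in>Act (cur h). (if a = \<sigma> (cur h) then 1 else 0) * (\<Sum>s'\<in>St. pmf (Tr (cur h) a) s' * g a s'))"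
    unfolding Op_def dsum_def msched_def by (intro sum.cong) (auto simp: pmf_return)
  also have "\<dots> = (\<Sum>a\<in>Act (cur h). (if a = \<sigma> (cur h) then (\<Sum>s'\<in>St. pmf (Tr (cur h) a) s' * g a s') else 0))"
    by (rule sum.cong) auto
  also have "\<dots> = (\<Sum>s'\<in>St. pmf (Tr (cur h) (\<sigma> (cur h))) s' * g (\<sigma> (cur h)) s')"
    using assms by (simp add: sum.delta')
  finally show ?thesis .
qed

end

locale dmdp = fmdp M for M :: "('s,'a) mdp" +
  fixes r :: "'s \<Rightarrow> 'a \<Rightarrow> 's \<Rightarrow> real" and T :: "'s set" and b :: real
  assumes b0: "0 \<le> b" and b1: "b < 1"
begin

definition "Qv v s a = (\<Sum>s'\<in>St. pmf (Tr s a) s' * (r s a s' + b * v s'))"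
definition "Bell v s = (if s \<in> T then 0 else Max (Qv v s ` Act s))"
definition "nrm (g::'s \<Rightarrow> real) = Max ((\<lambda>s. \<bar>g s\<bar>) ` St)"

lemma St_ne: "St \<noteq> {}" using init_St by blast

lemma nrm_ge: "s \<in> St \<Longrightarrow> \<bar>g s\<bar> \<le> nrm g"
  unfolding nrm_def by (rule Max_ge) auto

lemma nrm_le: "(\<And>s. s \<in> St \<Longrightarrow> \<bar>g s\<bar> \<le> d) \<Longrightarrow> nrm g \<le> d"
  unfolding nrm_def using St_ne by (subst Max_le_iff) auto

lemma nrm_nonneg: "0 \<le> nrm g"
  using nrm_ge[OF init_St, of g] abs_ge_zero[of "g (m_init M)"] by linarith

lemma Qv_diff:
  assumes "s \<in> St" "a \<in> Act s"
  shows "\<bar>Qv v s a - Qv u s a\<bar> \<le> b * nrm (\<lambda>s. v s - u s)"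
proof -
  have "Qv v s a - Qv u s a = (\<Sum>s'\<in>St. pmf (Tr s a) s' * (b * (v s' - u s')))"
    unfolding Qv_def by (simp add: sum_subtractf[symmetric] algebra_simps)
  also have "\<bar>\<dots>\<bar> \<le> (\<Sum>s'\<in>St. pmf (Tr s a) s' * (b * nrm (\<lambda>s. v s - u s)))"
    by (rule order_trans[OF sum_abs], rule sum_mono)
       (use b0 in \<open>auto simp: abs_mult intro!: mult_left_mono nrm_ge\<close>)
  also have "\<dots> = b * nrm (\<lambda>s. v s - u s)"
    using sum_Tr[OF assms] by (simp add: sum_distrib_right[symmetric])
  finally show ?thesis .
qed

lemma Max_diff:
  fixes f g :: "'x \<Rightarrow> real"
  assumes "finite A" "A \<noteq> {}" "\<And>a. a \<in> A \<Longrightarrow> \<bar>f a - g a\<bar> \<le> d"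
  shows "\<bar>Max (f ` A) - Max (g ` A)\<bar> \<le> d"
proof -
  have "Max (f ` A) \<in> f ` A" "Max (g ` A) \<in> g ` A" using assms by (intro Max_in; simp)+
  then obtain a1 a2 where a1: "a1 \<in> A" "Max (f ` A) = f a1" and a2: "a2 \<in> A" "Max (g ` A) = g a2" by auto
  have "g a1 \<le> g a2" using a1 a2 assms Max_ge[of "g ` A" "g a1"] by auto
  moreover have "f a2 \<le> f a1" using a1 a2 assms Max_ge[of "f ` A" "f a2"] by auto
  ultimately show ?thesis using a1 a2 assms(3)[OF a1(1)] assms(3)[OF a2(1)] by linarith
qed

lemma Bell_diff: "s \<in> St \<Longrightarrow> \<bar>Bell v s - Bell u s\<bar> \<le> b * nrm (\<lambda>s. v s - u s)"
  unfolding Bell_def using b0 nrm_nonneg[of "\<lambda>s. v s - u s"]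
  by (auto intro!: Max_diff Qv_diff Act_ne)

definition "vi n = (Bell ^^ n) (\<lambda>_. 0)"
definition "c0 = nrm (\<lambda>s. vi 1 s - vi 0 s)"
definition "K0 = c0 / (1 - b)"

lemma vi_Suc: "vi (Suc n) = Bell (vi n)" by (simp add: vi_def)

lemma vi_step: "nrm (\<lambda>s. vi (Suc n) s - vi n s) \<le> b ^ n * c0"
proof (induction n)
  case 0 then show ?case by (simp add: c0_def)
next
  case (Suc n)
  have "nrm (\<lambda>s. vi (Suc (Suc n)) s - vi (Suc n) s) \<le> b * nrm (\<lambda>s. vi (Suc n) s - vi n s)"
    by (rule nrm_le) (simp only: vi_Suc[of "Suc n"] vi_Suc[of n] Bell_diff)
  also have "\<dots> \<le> b * (b ^ n * c0)" using Suc b0 by (rule mult_left_mono)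
  finally show ?case by simp
qed

lemma K0_nonneg: "0 \<le> K0" unfolding K0_def c0_def by (rule divide_nonneg_pos[OF nrm_nonneg]) (use b1 in simp)

lemma vi_close: assumes sS: "s \<in> St" shows "n \<le> m \<Longrightarrow> \<bar>vi m s - vi n s\<bar> \<le> c0 * (b ^ n - b ^ m) / (1 - b)"
proof (induction m rule: dec_induct)
  case base then show ?case by simp
next
  case (step m)
  have "\<bar>vi (Suc m) s - vi n s\<bar> \<le> \<bar>vi (Suc m) s - vi m s\<bar> + \<bar>vi m s - vi n s\<bar>" by linarith
  also have "\<dots> \<le> b ^ m * c0 + c0 * (b ^ n - b ^ m) / (1 - b)"
    using nrm_ge[OF sS, of "\<lambda>s. vi (Suc m) s - vi m s"] vi_step[of m] step.IH by linarith
  also have "\<dots> = c0 * (b ^ n - b ^ Suc m) / (1 - b)"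
    using b1 by (simp add: field_simps)
  finally show ?case .
qed

lemma vi_close': "s \<in> St \<Longrightarrow> n \<le> m \<Longrightarrow> \<bar>vi m s - vi n s\<bar> \<le> K0 * b ^ n"
proof -
  assume a: "s \<in> St" "n \<le> m"
  have "c0 * (b ^ n - b ^ m) / (1 - b) \<le> c0 * b ^ n / (1 - b)"
    using b0 b1 nrm_nonneg by (auto simp: c0_def intro!: divide_right_mono mult_left_mono)
  then show ?thesis using vi_close[OF a(1) a(2)] by (simp add: K0_def)
qed

lemma vi_conv: assumes "s \<in> St" shows "convergent (\<lambda>n. vi n s)"
proof -
  have "Cauchy (\<lambda>n. vi n s)"
  proof (rule CauchyI)
    fix e :: real assume e: "0 < e"
    have "(\<lambda>n. K0 * b ^ n) \<longlonglongrightarrow> K0 * 0"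
      by (intro tendsto_mult tendsto_const LIMSEQ_power_zero) (use b0 b1 in auto)
    from LIMSEQ_D[OF this e] obtain N where N0: "\<forall>n\<ge>N. norm (K0 * b ^ n - K0 * 0) < e" by blast
    have N: "\<And>n. n \<ge> N \<Longrightarrow> \<bar>K0 * b ^ n\<bar> < e" using N0 by simp
    show "\<exists>M. \<forall>m\<ge>M. \<forall>n\<ge>M. norm (vi m s - vi n s) < e"
    proof (intro exI allI impI)
      fix m n assume mn: "m \<ge> N" "n \<ge> N"
      have "\<bar>vi m s - vi n s\<bar> \<le> K0 * b ^ min m n"
        using vi_close'[OF assms, of n m] vi_close'[OF assms, of m n] by (cases "n \<le> m") (auto simp: min_def)
      also have "\<dots> < e" using N[of "min m n"] mn K0_nonneg b0 by auto
      finally show "norm (vi m s - vi n s) < e" by simp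
    qed
  qed
  then show ?thesis by (simp add: Cauchy_convergent_iff)
qed

definition "vs s = lim (\<lambda>n. vi n s)"

lemma vs_close: assumes "s \<in> St" shows "\<bar>vs s - vi n s\<bar> \<le> K0 * b ^ n"
proof -
  have "(\<lambda>m. \<bar>vi m s - vi n s\<bar>) \<longlonglongrightarrow> \<bar>vs s - vi n s\<bar>"
    using vi_conv[OF assms] unfolding vs_def convergent_LIMSEQ_iff by (intro tendsto_intros)
  then show ?thesis by (rule LIMSEQ_le_const2) (use vi_close'[OF assms] in auto)
qed

lemma vs_fix: assumes "s \<in> St" shows "Bell vs s = vs s"
proof -
  have "\<bar>Bell vs s - vs s\<bar> \<le> (2 * K0 * b) * b ^ n" for n
  proof -
    have "\<bar>Bell vs s - vs s\<bar> \<le> \<bar>Bell vs s - Bell (vi n) s\<bar> + \<bar>vi (Suc n) s - vs s\<bar>"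
      by (simp add: vi_Suc)
    also have "\<dots> \<le> b * (K0 * b ^ n) + K0 * b ^ Suc n"
      using Bell_diff[OF assms, of vs "vi n"] nrm_le[of "\<lambda>s. vs s - vi n s" "K0 * b ^ n"] vs_close
        vs_close[OF assms, of "Suc n"] b0
      by (smt (verit, ccfv_threshold) mult_left_mono)
    also have "\<dots> = (2 * K0 * b) * b ^ n" by simp
    finally show ?thesis .
  qed
  then have "\<bar>Bell vs s - vs s\<bar> \<le> 0" by (intro pow_bound[OF _ b0 b1])
  then show ?thesis by simp
qed

definition "gr s = (if s \<in> St then (SOME a. a \<in> Act s \<and> Qv vs s a = Max (Qv vs s ` Act s)) else undefined)"

lemma gr: assumes "s \<in> St" shows "gr s \<in> Act s" "Qv vs s (gr s) = Max (Qv vs s ` Act s)"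
proof -
  have "\<exists>a. a \<in> Act s \<and> Qv vs s a = Max (Qv vs s ` Act s)"
  proof -
    have "Max (Qv vs s ` Act s) \<in> Qv vs s ` Act s" using Act_ne[OF assms] assms by (intro Max_in) auto
    then show ?thesis by auto
  qed
  from someI_ex[OF this] show "gr s \<in> Act s" "Qv vs s (gr s) = Max (Qv vs s ` Act s)"
    using assms by (auto simp: gr_def)
qed

lemma gr_PiE: "gr \<in> Pi\<^sub>E St Act"
  using gr by (auto simp: gr_def PiE_def extensional_def)

lemma Op_Qv: "Op \<mu> h (\<lambda>a s'. r (cur h) a s' + b * v s') = (\<Sum>a\<in>Act (cur h). pmf (\<mu> h) a * Qv v (cur h) a)"
  by (simp add: Op_def dsum_def Qv_def)

lemma vs_T: "s \<in> St \<Longrightarrow> s \<in> T \<Longrightarrow> vs s = 0"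
  using vs_fix[of s] by (simp add: Bell_def)

lemma disc_upper:
  assumes v: "valid_sched M \<mu>"
  shows "cur h \<in> St \<Longrightarrow> disc r T b \<mu> n h \<le> vs (cur h) + b ^ n * nrm vs"
proof (induction n arbitrary: h)
  case 0 then show ?case using nrm_ge[OF 0, of vs] by simp
next
  case (Suc n)
  show ?case
  proof (cases "cur h \<in> T")
    case True
    have "0 \<le> b ^ Suc n * nrm vs" by (intro mult_nonneg_nonneg zero_le_power b0 nrm_nonneg)
    then show ?thesis using vs_T[OF Suc.prems True] True by simp
  next
    case False
    have "disc r T b \<mu> (Suc n) h \<le> Op \<mu> h (\<lambda>a s'. (r (cur h) a s' + b * vs s') + b ^ Suc n * nrm vs)"
      unfolding disc.simps(2) if_not_P[OF False]
    proof (rule Op_mono)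
      fix a s assume as: "a \<in> Act (cur h)" "s \<in> St"
      have "b * disc r T b \<mu> n (hx h a s) \<le> b * (vs s + b ^ n * nrm vs)"
        using mult_left_mono[OF Suc.IH[of "hx h a s"] b0] as by simp
      then show "r (cur h) a s + b * disc r T b \<mu> n (hx h a s) \<le> r (cur h) a s + b * vs s + b ^ Suc n * nrm vs"
        by (simp add: algebra_simps)
    qed
    also have "\<dots> = (\<Sum>a\<in>Act (cur h). pmf (\<mu> h) a * Qv vs (cur h) a) + b ^ Suc n * nrm vs"
      by (subst Op_add[of \<mu> h "\<lambda>a s'. r (cur h) a s' + b * vs s'" "\<lambda>a s'. b ^ Suc n * nrm vs"])
         (simp only: Op_Qv Op_const[OF v Suc.prems])
    also have "(\<Sum>a\<in>Act (cur h). pmf (\<mu> h) a * Qv vs (cur h) a) \<le> (\<Sum>a\<in>Act (cur h). pmf (\<mu> h) a * Max (Qv vs (cur h) ` Act (cur h)))"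
      using Suc.prems by (intro sum_mono mult_left_mono) auto
    also have "\<dots> = vs (cur h)"
      using sum_sched[OF v Suc.prems] vs_fix[OF Suc.prems] False
      by (simp add: sum_distrib_right[symmetric] Bell_def)
    finally show ?thesis by simp
  qed
qed

lemma disc_lower:
  shows "cur h \<in> St \<Longrightarrow> vs (cur h) - b ^ n * nrm vs \<le> disc r T b (msched gr) n h"
proof (induction n arbitrary: h)
  case 0 then show ?case using nrm_ge[OF 0, of vs] by simp
next
  case (Suc n)
  show ?case
  proof (cases "cur h \<in> T")
    case True
    have "0 \<le> b ^ Suc n * nrm vs" by (intro mult_nonneg_nonneg zero_le_power b0 nrm_nonneg)
    then show ?thesis using vs_T[OF Suc.prems True] True by simp
  next
    case False
    have vm: "valid_sched M (msched gr)" using gr by (intro valid_msched) auto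
    have "vs (cur h) - b ^ Suc n * nrm vs = Qv vs (cur h) (gr (cur h)) - b ^ Suc n * nrm vs"
      using gr[OF Suc.prems] vs_fix[OF Suc.prems] False by (simp add: Bell_def)
    also have "\<dots> = Op (msched gr) h (\<lambda>a s'. (r (cur h) a s' + b * vs s') + (-(b ^ Suc n * nrm vs)))"
      by (simp only: Op_add Op_const[OF vm Suc.prems] Op_msched[of gr h, OF gr(1)[OF Suc.prems] Suc.prems])
         (simp add: Qv_def distrib_left sum.distrib)
    also have "\<dots> \<le> disc r T b (msched gr) (Suc n) h"
      unfolding disc.simps(2) if_not_P[OF False]
    proof (rule Op_mono)
      fix a s assume as: "a \<in> Act (cur h)" "s \<in> St"
      have "b * (vs s - b ^ n * nrm vs) \<le> b * disc r T b (msched gr) n (hx h a s)"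
        using mult_left_mono[OF Suc.IH[of "hx h a s"] b0] as by simp
      then show "r (cur h) a s + b * vs s + - (b ^ Suc n * nrm vs) \<le> r (cur h) a s + b * disc r T b (msched gr) n (hx h a s)"
        by (simp add: algebra_simps)
    qed
    finally show ?thesis .
  qed
qed

lemma disc_opt:
  "\<exists>\<sigma>\<in>Pi\<^sub>E St Act. \<exists>C. \<forall>\<mu> n. valid_sched M \<mu> \<longrightarrow>
     disc r T b \<mu> n (m_init M, []) \<le> disc r T b (msched \<sigma>) n (m_init M, []) + b ^ n * C"
proof (intro bexI exI allI impI)
  fix \<mu> n assume v: "valid_sched M \<mu>"
  show "disc r T b \<mu> n (m_init M, []) \<le> disc r T b (msched gr) n (m_init M, []) + b ^ n * (2 * nrm vs)"
    using disc_upper[OF v, of "(m_init M, [])" n] disc_lower[of "(m_init M, [])" n] by simp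
qed (rule gr_PiE)

end

context fmdp
begin

lemma dmdp_inst: "0 \<le> b \<Longrightarrow> b < 1 \<Longrightarrow> dmdp M b"
  by (intro dmdp.intro fmdp_axioms dmdp_axioms.intro)

theorem md_opt:
  assumes conv: "\<And>\<mu>. valid_sched M \<mu> \<Longrightarrow> convergent (\<lambda>n. exp_rew_n M r T \<mu> n (m_init M, []))"
  shows "\<exists>\<sigma>\<in>Pi\<^sub>E St Act. \<forall>\<mu>. valid_sched M \<mu> \<longrightarrow> exp_rew M r T \<mu> \<le> exp_rew M r T (msched \<sigma>)"
proof -
  define h0 :: "('s,'a) hist" where "h0 = (m_init M, [])"
  have h0: "cur h0 \<in> St" by (simp add: h0_def)
  define bk where "bk k = real k / (real k + 1)" for k :: nat
  have bk0: "0 \<le> bk k" and bk1: "bk k < 1" and bk2: "1 - bk k = 1 / (real k + 1)" for k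
    by (auto simp: bk_def field_simps)
  have "\<forall>k. \<exists>p. fst p \<in> Pi\<^sub>E St Act \<and> (\<forall>\<mu> n. valid_sched M \<mu> \<longrightarrow>
     disc r T (bk k) \<mu> n h0 \<le> disc r T (bk k) (msched (fst p)) n h0 + bk k ^ n * snd p)"
  proof
    fix k
    obtain \<sigma> C where "\<sigma> \<in> Pi\<^sub>E St Act" "\<forall>\<mu> n. valid_sched M \<mu> \<longrightarrow>
     disc r T (bk k) \<mu> n h0 \<le> disc r T (bk k) (msched \<sigma>) n h0 + bk k ^ n * C"
      using dmdp.disc_opt[OF dmdp_inst[OF bk0 bk1], of r T k] unfolding h0_def by blast
    then show "\<exists>p. fst p \<in> Pi\<^sub>E St Act \<and> (\<forall>\<mu> n. valid_sched M \<mu> \<longrightarrow>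
     disc r T (bk k) \<mu> n h0 \<le> disc r T (bk k) (msched (fst p)) n h0 + bk k ^ n * snd p)"
      by (intro exI[of _ "(\<sigma>, C)"]) simp
  qed
  from choice[OF this] obtain F where F: "\<forall>k. fst (F k) \<in> Pi\<^sub>E St Act \<and> (\<forall>\<mu> n. valid_sched M \<mu> \<longrightarrow>
     disc r T (bk k) \<mu> n h0 \<le> disc r T (bk k) (msched (fst (F k))) n h0 + bk k ^ n * snd (F k))" by blast
  define \<sigma>k where "\<sigma>k k = fst (F k)" for k
  define Ck where "Ck k = snd (F k)" for k
  have sk: "\<And>k. \<sigma>k k \<in> Pi\<^sub>E St Act" using F by (simp add: \<sigma>k_def)
  have skC: "\<And>k \<mu> n. valid_sched M \<mu> \<Longrightarrow> disc r T (bk k) \<mu> n h0 \<le> disc r T (bk k) (msched (\<sigma>k k)) n h0 + bk k ^ n * Ck k"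
    using F by (simp add: \<sigma>k_def Ck_def)
  have fin: "finite (\<sigma>k ` UNIV)"
    by (rule finite_subset[OF _ finite_PiE[OF St_fin Act_fin]]) (use sk in auto)
  obtain k0 where k0: "infinite {k. \<sigma>k k = \<sigma>k k0}"
    using pigeonhole_infinite[OF infinite_UNIV_nat fin] by auto
  define \<sigma> where "\<sigma> = \<sigma>k k0"
  have sP: "\<sigma> \<in> Pi\<^sub>E St Act" using sk by (simp add: \<sigma>_def)
  have vs: "valid_sched M (msched \<sigma>)" using sP by (intro valid_msched) auto
  show ?thesis
  proof (intro bexI[OF _ sP] allI impI)
    fix \<mu> assume v: "valid_sched M \<mu>"
    define S1 where "S1 n = exp_rew_n M r T \<mu> n h0" for n
    define S2 where "S2 n = exp_rew_n M r T (msched \<sigma>) n h0" for n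
    have L1: "S1 \<longlonglongrightarrow> exp_rew M r T \<mu>"
      using conv[OF v] unfolding S1_def h0_def exp_rew_def by (simp add: convergent_LIMSEQ_iff)
    have L2: "S2 \<longlonglongrightarrow> exp_rew M r T (msched \<sigma>)"
      using conv[OF vs] unfolding S2_def h0_def exp_rew_def by (simp add: convergent_LIMSEQ_iff)
    show "exp_rew M r T \<mu> \<le> exp_rew M r T (msched \<sigma>)"
    proof (rule field_le_epsilon)
      fix e :: real assume e: "0 < e"
      obtain K1 where K1: "\<And>b n. 0 \<le> b \<Longrightarrow> b < 1 \<Longrightarrow>
          \<bar>(\<Sum>k<n. b ^ k * (S1 (Suc k) - S1 k)) - exp_rew M r T \<mu>\<bar> \<le> e/3 + (1 - b) * K1 + b ^ n * K1"
        using abel_fin[of S1, OF _ L1, of "e/3"] e by (auto simp: S1_def)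
      obtain K2 where K2: "\<And>b n. 0 \<le> b \<Longrightarrow> b < 1 \<Longrightarrow>
          \<bar>(\<Sum>k<n. b ^ k * (S2 (Suc k) - S2 k)) - exp_rew M r T (msched \<sigma>)\<bar> \<le> e/3 + (1 - b) * K2 + b ^ n * K2"
        using abel_fin[of S2, OF _ L2, of "e/3"] e by (auto simp: S2_def)
      define KK where "KK = \<bar>K1\<bar> + \<bar>K2\<bar>"
      obtain k where k: "\<sigma>k k = \<sigma>" "k \<ge> nat \<lceil>3 * KK / e\<rceil>"
        using k0 unfolding infinite_nat_iff_unbounded_le \<sigma>_def by blast
      let ?b = "bk k"
      have small: "(1 - ?b) * (K1 + K2) \<le> e / 3"
      proof -
        have "(1 - ?b) * (K1 + K2) \<le> (1 - ?b) * KK"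
          using bk1[of k] by (intro mult_left_mono) (auto simp: KK_def)
        also have "\<dots> = KK / (real k + 1)" by (simp add: bk2)
        also have "\<dots> \<le> e / 3"
        proof -
          have "3 * KK / e \<le> real k" using k(2) by linarith
          then have "3 * KK \<le> real k * e" using e by (simp add: divide_le_eq)
          then show ?thesis using e by (simp add: divide_le_eq field_simps KK_def)
        qed
        finally show ?thesis .
      qed
      have *: "exp_rew M r T \<mu> - exp_rew M r T (msched \<sigma>) - (2*e/3 + (1 - ?b) * (K1 + K2)) \<le> (K1 + K2 + Ck k) * ?b ^ n" for n
      proof -
        have d1: "disc r T ?b \<mu> n h0 = (\<Sum>k<n. ?b ^ k * (S1 (Suc k) - S1 k))"
          unfolding S1_def by (rule disc_eq[OF v h0])
        have d2: "disc r T ?b (msched \<sigma>) n h0 = (\<Sum>k<n. ?b ^ k * (S2 (Suc k) - S2 k))"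
          unfolding S2_def by (rule disc_eq[OF vs h0])
        have "disc r T ?b \<mu> n h0 \<le> disc r T ?b (msched \<sigma>) n h0 + ?b ^ n * Ck k"
          using skC[OF v, of k n] k(1) by simp
        moreover have "exp_rew M r T \<mu> - disc r T ?b \<mu> n h0 \<le> e/3 + (1 - ?b) * K1 + ?b ^ n * K1"
          using abs_le_D2[OF K1[OF bk0 bk1, of k n]] d1 by simp
        moreover have "disc r T ?b (msched \<sigma>) n h0 - exp_rew M r T (msched \<sigma>) \<le> e/3 + (1 - ?b) * K2 + ?b ^ n * K2"
          using abs_le_D1[OF K2[OF bk0 bk1, of k n]] d2 by simp
        moreover have "(1 - ?b) * (K1 + K2) = (1 - ?b) * K1 + (1 - ?b) * K2"
          "(K1 + K2 + Ck k) * ?b ^ n = ?b ^ n * K1 + ?b ^ n * K2 + ?b ^ n * Ck k" by (simp_all add: algebra_simps)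
        ultimately show ?thesis by linarith
      qed
      have "exp_rew M r T \<mu> - exp_rew M r T (msched \<sigma>) - (2*e/3 + (1 - ?b) * (K1 + K2)) \<le> 0"
        using * by (intro pow_bound[of _ "K1 + K2 + Ck k" "bk k", OF _ bk0 bk1]) (simp add: mult.commute)
      then show "exp_rew M r T \<mu> \<le> exp_rew M r T (msched \<sigma>) + e" using small by linarith
    qed
  qed
qed

end

definition mixp :: "real \<Rightarrow> 'a pmf \<Rightarrow> 'a pmf \<Rightarrow> 'a pmf" where
  "mixp c p q = bind_pmf (bernoulli_pmf c) (\<lambda>b. if b then p else q)"

lemma pmf_mixp: "0 \<le> c \<Longrightarrow> c \<le> 1 \<Longrightarrow> pmf (mixp c p q) x = c * pmf p x + (1 - c) * pmf q x"
  unfolding mixp_def by (simp add: pmf_bind mult.commute)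

lemma set_mixp: "set_pmf (mixp c p q) \<subseteq> set_pmf p \<union> set_pmf q"
  unfolding mixp_def by (auto simp: set_bind_pmf split: if_splits)

definition Wt :: "('s,'a) sched \<Rightarrow> ('s,'a) hist \<Rightarrow> real" where
  "Wt \<mu> h = (\<Prod>i<length (snd h). pmf (\<mu> (fst h, take i (snd h))) (fst (snd h ! i)))"

lemma Wt_nil[simp]: "Wt \<mu> (x, []) = 1" by (simp add: Wt_def)

lemma Wt_snoc: "Wt \<mu> (fst h, snd h @ [(a, s)]) = Wt \<mu> h * pmf (\<mu> h) a"
proof -
  have "Wt \<mu> (fst h, snd h @ [(a, s)]) = (\<Prod>i<length (snd h). pmf (\<mu> (fst h, take i (snd h))) (fst (snd h ! i))) * pmf (\<mu> (fst h, snd h)) a"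
    unfolding Wt_def by (auto simp: nth_append intro!: prod.cong)
  then show ?thesis by (simp add: Wt_def)
qed

lemma Wt_nonneg: "0 \<le> Wt \<mu> h" unfolding Wt_def by (simp add: prod_nonneg)

definition mixs :: "real \<Rightarrow> ('s,'a) sched \<Rightarrow> ('s,'a) sched \<Rightarrow> ('s,'a) sched" where
  "mixs c \<mu>1 \<mu>2 h = (if c * Wt \<mu>1 h + (1 - c) * Wt \<mu>2 h = 0 then \<mu>1 h
     else mixp (c * Wt \<mu>1 h / (c * Wt \<mu>1 h + (1 - c) * Wt \<mu>2 h)) (\<mu>1 h) (\<mu>2 h))"

lemma mix_alg:
  fixes A B Em E1 E2 q r :: real
  assumes "(A + B) * Em = A * E1 + B * E2"
  shows "(A + B) * (q * (r + Em)) = A * (q * (r + E1)) + B * (q * (r + E2))"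
proof -
  have "(A + B) * (q * (r + Em)) = q * ((A + B) * r) + q * ((A + B) * Em)" by (simp add: algebra_simps)
  also have "\<dots> = q * ((A + B) * r) + q * (A * E1 + B * E2)" using assms by simp
  also have "\<dots> = A * (q * (r + E1)) + B * (q * (r + E2))" by (simp add: algebra_simps)
  finally show ?thesis .
qed

context fmdp
begin

lemma valid_mixs: "valid_sched M \<mu>1 \<Longrightarrow> valid_sched M \<mu>2 \<Longrightarrow> valid_sched M (mixs c \<mu>1 \<mu>2)"
proof -
  assume v: "valid_sched M \<mu>1" "valid_sched M \<mu>2"
  have "set_pmf (mixs c \<mu>1 \<mu>2 h) \<subseteq> set_pmf (\<mu>1 h) \<union> set_pmf (\<mu>2 h)" for h
  proof (cases "c * Wt \<mu>1 h + (1 - c) * Wt \<mu>2 h = 0")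
    case True then show ?thesis by (simp add: mixs_def)
  next
    case False then show ?thesis
      using set_mixp[of "c * Wt \<mu>1 h / (c * Wt \<mu>1 h + (1 - c) * Wt \<mu>2 h)" "\<mu>1 h" "\<mu>2 h"] by (simp add: mixs_def)
  qed
  then show ?thesis unfolding valid_sched_def using sched_sub[OF v(1)] sched_sub[OF v(2)] by blast
qed

lemma Op_sum_form: "Op \<mu> h g = (\<Sum>a\<in>Act (cur h). pmf (\<mu> h) a * (\<Sum>s\<in>St. pmf (Tr (cur h) a) s * g a s))"
  by (simp add: Op_def dsum_def)

lemma kuhn:
  assumes c: "0 \<le> c" "c \<le> 1" and v1: "valid_sched M \<mu>1" and v2: "valid_sched M \<mu>2"
  shows "cur h \<in> St \<Longrightarrow> (c * Wt \<mu>1 h + (1 - c) * Wt \<mu>2 h) * exp_rew_n M r T (mixs c \<mu>1 \<mu>2) n h =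
     c * Wt \<mu>1 h * exp_rew_n M r T \<mu>1 n h + (1 - c) * Wt \<mu>2 h * exp_rew_n M r T \<mu>2 n h"
proof (induction n arbitrary: h)
  case 0 then show ?case by simp
next
  case (Suc n)
  let ?m = "mixs c \<mu>1 \<mu>2"
  have vm: "valid_sched M ?m" by (rule valid_mixs[OF v1 v2])
  show ?case
  proof (cases "cur h \<in> T")
    case True then show ?thesis by (simp add: ER_T del: exp_rew_n.simps)
  next
    case False
    define d1 where "d1 = c * Wt \<mu>1 h"
    define d2 where "d2 = (1 - c) * Wt \<mu>2 h"
    have d1: "0 \<le> d1" and d2: "0 \<le> d2" using c by (auto simp: d1_def d2_def Wt_nonneg)
    define F where "F \<mu> a = (\<Sum>s\<in>St. pmf (Tr (cur h) a) s * (r (cur h) a s + exp_rew_n M r T \<mu> n (hx h a s)))" for \<mu> a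
    have ES: "exp_rew_n M r T \<mu> (Suc n) h = (\<Sum>a\<in>Act (cur h). pmf (\<mu> h) a * F \<mu> a)" if "valid_sched M \<mu>" for \<mu>
      using False by (simp only: ER_step[OF that Suc.prems] if_False Op_sum_form F_def)
    have key: "(d1 * pmf (\<mu>1 h) a + d2 * pmf (\<mu>2 h) a) * F ?m a = d1 * pmf (\<mu>1 h) a * F \<mu>1 a + d2 * pmf (\<mu>2 h) a * F \<mu>2 a"
      if a: "a \<in> Act (cur h)" for a
    proof -
      have IHs: "(d1 * pmf (\<mu>1 h) a + d2 * pmf (\<mu>2 h) a) * exp_rew_n M r T ?m n (hx h a s) =
          d1 * pmf (\<mu>1 h) a * exp_rew_n M r T \<mu>1 n (hx h a s) + d2 * pmf (\<mu>2 h) a * exp_rew_n M r T \<mu>2 n (hx h a s)"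
        if s: "s \<in> St" for s
        using Suc.IH[of "hx h a s"] s by (simp only: Wt_snoc d1_def d2_def mult.assoc cur_snoc snd_conv)
      have "(d1 * pmf (\<mu>1 h) a + d2 * pmf (\<mu>2 h) a) * F ?m a =
        (\<Sum>s\<in>St. d1 * pmf (\<mu>1 h) a * (pmf (Tr (cur h) a) s * (r (cur h) a s + exp_rew_n M r T \<mu>1 n (hx h a s))) +
                 d2 * pmf (\<mu>2 h) a * (pmf (Tr (cur h) a) s * (r (cur h) a s + exp_rew_n M r T \<mu>2 n (hx h a s))))"
        unfolding F_def sum_distrib_left by (intro sum.cong refl mix_alg IHs)
      also have "\<dots> = d1 * pmf (\<mu>1 h) a * F \<mu>1 a + d2 * pmf (\<mu>2 h) a * F \<mu>2 a"
        unfolding F_def sum.distrib sum_distrib_left ..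
      finally show ?thesis .
    qed
    show ?thesis
    proof (cases "d1 + d2 = 0")
      case True
      then have "d1 = 0" "d2 = 0" using d1 d2 by linarith+
      then show ?thesis by (simp add: d1_def[symmetric] d2_def[symmetric])
    next
      case nz: False
      have pm: "pmf (?m h) a = (d1 * pmf (\<mu>1 h) a + d2 * pmf (\<mu>2 h) a) / (d1 + d2)" for a
      proof -
        have "0 \<le> d1 / (d1 + d2)" "d1 / (d1 + d2) \<le> 1" using d1 d2 nz by auto
        then have "pmf (?m h) a = d1 / (d1 + d2) * pmf (\<mu>1 h) a + (1 - d1 / (d1 + d2)) * pmf (\<mu>2 h) a"
          using nz unfolding mixs_def d1_def[symmetric] d2_def[symmetric] by (simp add: pmf_mixp)
        also have "1 - d1 / (d1 + d2) = d2 / (d1 + d2)" using nz by (simp add: field_simps)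
        finally show ?thesis by (simp add: add_divide_distrib)
      qed
      have "(d1 + d2) * exp_rew_n M r T ?m (Suc n) h = (\<Sum>a\<in>Act (cur h). (d1 * pmf (\<mu>1 h) a + d2 * pmf (\<mu>2 h) a) * F ?m a)"
        unfolding ES[OF vm] sum_distrib_left pm using nz by (intro sum.cong) simp_all
      also have "\<dots> = (\<Sum>a\<in>Act (cur h). d1 * pmf (\<mu>1 h) a * F \<mu>1 a + d2 * pmf (\<mu>2 h) a * F \<mu>2 a)"
        by (intro sum.cong refl key)
      also have "\<dots> = d1 * exp_rew_n M r T \<mu>1 (Suc n) h + d2 * exp_rew_n M r T \<mu>2 (Suc n) h"
        unfolding ES[OF v1] ES[OF v2] sum.distrib sum_distrib_left by (simp add: mult.assoc)
      finally show ?thesis by (simp add: d1_def d2_def)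
    qed
  qed
qed

lemma kuhn_init:
  assumes c: "0 \<le> c" "c \<le> 1" and v1: "valid_sched M \<mu>1" and v2: "valid_sched M \<mu>2"
  shows "exp_rew_n M r T (mixs c \<mu>1 \<mu>2) n (m_init M, []) =
     c * exp_rew_n M r T \<mu>1 n (m_init M, []) + (1 - c) * exp_rew_n M r T \<mu>2 n (m_init M, [])"
  using kuhn[OF c v1 v2, of "(m_init M, [])" r T n] by simp

lemma kuhn_lim:
  assumes c: "0 \<le> c" "c \<le> 1" and v1: "valid_sched M \<mu>1" and v2: "valid_sched M \<mu>2"
    and cv1: "convergent (\<lambda>n. exp_rew_n M r T \<mu>1 n (m_init M, []))"
    and cv2: "convergent (\<lambda>n. exp_rew_n M r T \<mu>2 n (m_init M, []))"
  shows "exp_rew M r T (mixs c \<mu>1 \<mu>2) = c * exp_rew M r T \<mu>1 + (1 - c) * exp_rew M r T \<mu>2"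
proof -
  have "(\<lambda>n. c * exp_rew_n M r T \<mu>1 n (m_init M, []) + (1 - c) * exp_rew_n M r T \<mu>2 n (m_init M, []))
     \<longlonglongrightarrow> c * exp_rew M r T \<mu>1 + (1 - c) * exp_rew M r T \<mu>2"
    using cv1 cv2 unfolding exp_rew_def convergent_LIMSEQ_iff by (intro tendsto_intros)
  then show ?thesis unfolding exp_rew_def kuhn_init[OF assms(1-4)] by (rule limI)
qed

end

lemma fin_funs: "finite (UNIV :: ('n::finite \<Rightarrow> 'n) set)" by simp

locale inst_ctx =
  fixes X :: "('n::finite,'s,'a,'q,'l) inst"
  assumes agents_wf: "\<forall>i. wf_mdp (ag X i)"
    and tasks_wf: "\<forall>j. wf_dfa (task X j)"
    and reward_finite: "\<forall>i j \<mu>. valid_sched (pmdp X i j) \<mu> \<longrightarrow>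
          convergent (\<lambda>n. exp_rew_n (pmdp X i j) (prew X i j (Inl i)) (pdone X j) \<mu> n
                              (m_init (pmdp X i j), []))"
begin

lemma fm: "fmdp (pmdp X i j)"
proof
  have a: "wf_mdp (ag X i)" and d: "wf_dfa (task X j)" using agents_wf tasks_wf by auto
  show "wf_mdp (pmdp X i j)"
    using a d unfolding wf_mdp_def wf_dfa_def pmdp_def prod_mdp_def
    by (auto simp: case_prod_beta)
qed

abbreviation "E i j k \<mu> n \<equiv> exp_rew_n (pmdp X i j) (prew X i j k) (pdone X j) \<mu> n (m_init (pmdp X i j), [])"

lemma acc_bound:
  assumes v: "valid_sched (pmdp X i j) \<mu>"
  shows "cur h \<in> m_states (pmdp X i j) \<Longrightarrow> exp_rew_n (pmdp X i j) (prew X i j (Inr j')) (pdone X j) \<mu> n h \<le> 1"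
proof (induction n arbitrary: h)
  case 0 then show ?case by simp
next
  case (Suc n)
  interpret fmdp "pmdp X i j" by (rule fm)
  show ?case
  proof (cases "cur h \<in> pdone X j")
    case True then show ?thesis by (simp add: ER_T del: exp_rew_n.simps)
  next
    case False
    have "Op \<mu> h (\<lambda>a s'. prew X i j (Inr j') (cur h) a s' + exp_rew_n (pmdp X i j) (prew X i j (Inr j')) (pdone X j) \<mu> n (hx h a s'))
       \<le> Op \<mu> h (\<lambda>a s'. 1)"
    proof (rule Op_mono)
      fix a s assume as: "a \<in> Act (cur h)" "s \<in> St"
      show "prew X i j (Inr j') (cur h) a s + exp_rew_n (pmdp X i j) (prew X i j (Inr j')) (pdone X j) \<mu> n (hx h a s) \<le> 1"
      proof (cases "j' = j \<and> snd (cur h) \<notin> d_acc (task X j) \<and> snd s \<in> d_acc (task X j)")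
        case True
        then have "s \<in> pdone X j" by (auto simp: pdone_def)
        then show ?thesis using True by (simp add: prew_def ER_T del: exp_rew_n.simps)
      next
        case F: False
        have "prew X i j (Inr j') (cur h) a s = 0" using F by (auto simp: prew_def)
        then show ?thesis using Suc.IH[of "hx h a s"] as by simp
      qed
    qed
    then show ?thesis using False by (simp only: ER_step[OF v Suc.prems] if_False Op_const[OF v Suc.prems])
  qed
qed

lemma conv_acc:
  assumes v: "valid_sched (pmdp X i j) \<mu>"
  shows "convergent (\<lambda>n. E i j (Inr j') \<mu> n)"
proof -
  interpret fmdp "pmdp X i j" by (rule fm)
  have nn: "\<And>x a y. 0 \<le> prew X i j (Inr j') x a y" by (simp add: prew_def)
  have "incseq (\<lambda>n. E i j (Inr j') \<mu> n)"
    by (rule incseq_SucI, rule conjunct2[OF ER_nonneg_mono[OF v _ nn]]) simp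
  moreover have "bdd_above (range (\<lambda>n. E i j (Inr j') \<mu> n))"
  proof -
    have "E i j (Inr j') \<mu> n \<le> 1" for n by (rule acc_bound[OF v]) simp
    then show ?thesis by (intro bdd_aboveI[of _ 1]) auto
  qed
  ultimately show ?thesis using LIMSEQ_incseq_SUP by (auto simp: convergent_def)
qed

lemma conv_all:
  assumes v: "valid_sched (pmdp X i j) \<mu>"
  shows "convergent (\<lambda>n. E i j k \<mu> n)"
proof (cases k)
  case (Inl i')
  show ?thesis
  proof (cases "i' = i")
    case True then show ?thesis using reward_finite v Inl by auto
  next
    case False
    interpret fmdp "pmdp X i j" by (rule fm)
    have "E i j k \<mu> n = 0" for n
      by (rule ER_zero[OF v]) (use False Inl in \<open>auto simp: prew_def\<close>)
    then show ?thesis by (simp add: convergent_const)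
  qed
next
  case (Inr j') then show ?thesis using conv_acc[OF v] by simp
qed

lemma wval_lin:
  assumes v: "valid_sched (pmdp X i j) \<mu>"
  shows "wval X i j w \<mu> = (\<Sum>k\<in>UNIV. w $ k * pval X i j \<mu> k)"
proof -
  interpret fmdp "pmdp X i j" by (rule fm)
  have "(\<lambda>n. exp_rew_n (pmdp X i j) (\<lambda>x a y. \<Sum>k\<in>UNIV. w $ k * prew X i j k x a y) (pdone X j) \<mu> n (m_init (pmdp X i j), []))
      = (\<lambda>n. \<Sum>k\<in>UNIV. w $ k * E i j k \<mu> n)"
    by (rule ext, rule ER_lin[OF v]) simp
  moreover have "(\<lambda>n. \<Sum>k\<in>UNIV. w $ k * E i j k \<mu> n) \<longlonglongrightarrow> (\<Sum>k\<in>UNIV. w $ k * pval X i j \<mu> k)"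
    unfolding pval_def exp_rew_def using conv_all[OF v]
    by (intro tendsto_intros) (simp add: convergent_LIMSEQ_iff)
  ultimately show ?thesis unfolding wval_def exp_rew_def by (simp add: limI)
qed

lemma conv_w:
  assumes v: "valid_sched (pmdp X i j) \<mu>"
  shows "convergent (\<lambda>n. exp_rew_n (pmdp X i j) (\<lambda>x a y. \<Sum>k\<in>UNIV. w $ k * prew X i j k x a y) (pdone X j) \<mu> n (m_init (pmdp X i j), []))"
proof -
  interpret fmdp "pmdp X i j" by (rule fm)
  have "(\<lambda>n. exp_rew_n (pmdp X i j) (\<lambda>x a y. \<Sum>k\<in>UNIV. w $ k * prew X i j k x a y) (pdone X j) \<mu> n (m_init (pmdp X i j), []))
      = (\<lambda>n. \<Sum>k\<in>UNIV. w $ k * E i j k \<mu> n)"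
    by (rule ext, rule ER_lin[OF v]) simp
  moreover have "convergent (\<lambda>n. \<Sum>k\<in>UNIV. w $ k * E i j k \<mu> n)"
    using conv_all[OF v] by (intro convergent_sum convergent_mult convergent_const) auto
  ultimately show ?thesis by simp
qed

lemma pval_zero:
  assumes v: "valid_sched (pmdp X i j) \<mu>"
  shows "i' \<noteq> i \<Longrightarrow> pval X i j \<mu> (Inl i') = 0" "j' \<noteq> j \<Longrightarrow> pval X i j \<mu> (Inr j') = 0"
proof -
  interpret fmdp "pmdp X i j" by (rule fm)
  show "i' \<noteq> i \<Longrightarrow> pval X i j \<mu> (Inl i') = 0"
    unfolding pval_def exp_rew_def by (subst ER_zero[OF v]) (auto simp: prew_def)
  show "j' \<noteq> j \<Longrightarrow> pval X i j \<mu> (Inr j') = 0"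
    unfolding pval_def exp_rew_def by (subst ER_zero[OF v]) (auto simp: prew_def)
qed

lemma sum_plus: "(\<Sum>k\<in>(UNIV :: ('n + 'n) set). g k) = (\<Sum>i\<in>UNIV. g (Inl i)) + (\<Sum>j\<in>UNIV. g (Inr j))"
  by (subst UNIV_Plus_UNIV[symmetric], subst sum.Plus) (simp_all add: comp_def)

lemma wval_dec:
  assumes v: "valid_sched (pmdp X i j) \<mu>"
  shows "wval X i j w \<mu> = w $ Inl i * pval X i j \<mu> (Inl i) + w $ Inr j * pval X i j \<mu> (Inr j)"
proof -
  have "wval X i j w \<mu> = (\<Sum>i'\<in>UNIV. w $ Inl i' * pval X i j \<mu> (Inl i')) + (\<Sum>j'\<in>UNIV. w $ Inr j' * pval X i j \<mu> (Inr j'))"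
    unfolding wval_lin[OF v] by (rule sum_plus)
  also have "(\<Sum>i'\<in>UNIV. w $ Inl i' * pval X i j \<mu> (Inl i')) = (\<Sum>i'\<in>UNIV. if i' = i then w $ Inl i * pval X i j \<mu> (Inl i) else 0)"
    by (intro sum.cong refl) (auto simp: pval_zero[OF v])
  also have "(\<Sum>j'\<in>UNIV. w $ Inr j' * pval X i j \<mu> (Inr j')) = (\<Sum>j'\<in>UNIV. if j' = j then w $ Inr j * pval X i j \<mu> (Inr j) else 0)"
    by (intro sum.cong refl) (auto simp: pval_zero[OF v])
  finally show ?thesis by simp
qed

lemma md_exists:
  "\<exists>\<sigma>\<in>Pi\<^sub>E (m_states (pmdp X i j)) (m_act (pmdp X i j)). \<forall>\<mu>. valid_sched (pmdp X i j) \<mu> \<longrightarrow>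
      wval X i j w \<mu> \<le> wval X i j w (msched \<sigma>)"
proof -
  interpret fmdp "pmdp X i j" by (rule fm)
  show ?thesis unfolding wval_def by (rule md_opt) (rule conv_w)
qed

end

definition vecval :: "('n::finite,'s,'a,'q,'l) inst \<Rightarrow> ('n \<Rightarrow> 'n \<Rightarrow> ('s \<times> 'q, 'a) sched) \<Rightarrow> ('n \<Rightarrow> 'n) \<Rightarrow> real^('n+'n)" where
  "vecval X F f = (\<chi> k. case k of Inl i \<Rightarrow> pval X i (inv f i) (F i (inv f i)) (Inl i)
                                | Inr j \<Rightarrow> pval X (f j) j (F (f j) j) (Inr j))"

lemma alg2_iff: "r \<in> alg2 X w \<longleftrightarrow> (\<exists>\<mu> f.
      (\<forall>i j. valid_sched (pmdp X i j) (\<mu> i j) \<and> memoryless_det (\<mu> i j) \<and>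
         (\<forall>\<mu>'. valid_sched (pmdp X i j) \<mu>' \<longrightarrow> wval X i j w \<mu>' \<le> wval X i j w (\<mu> i j))) \<and>
      bij f \<and>
      (\<forall>g. bij g \<longrightarrow> (\<Sum>j\<in>UNIV. wval X (g j) j w (\<mu> (g j) j))
                     \<le> (\<Sum>j\<in>UNIV. wval X (f j) j w (\<mu> (f j) j))) \<and>
      r = vecval X \<mu> f)"
  unfolding alg2_def vecval_def by simp

lemma C0_iff: "x \<in> C0 X \<longleftrightarrow> (\<exists>p \<sigma>. x = (\<chi> k. measure_pmf.expectation p (\<lambda>f. vecval X (\<sigma> f) f $ k)) \<and>
      (\<forall>f\<in>set_pmf p. bij f) \<and> (\<forall>f i j. valid_sched (pmdp X i j) (\<sigma> f i j)))"
  unfolding C0_def vecval_def by simp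

lemma inner_sum: "(w::real^'k) \<bullet> v = (\<Sum>k\<in>UNIV. w $ k * v $ k)"
  by (simp add: inner_vec_def)

context inst_ctx
begin

lemma w_vecval:
  assumes f: "bij f" and v: "\<And>i j. valid_sched (pmdp X i j) (F i j)"
  shows "w \<bullet> vecval X F f = (\<Sum>j\<in>UNIV. wval X (f j) j w (F (f j) j))"
proof -
  have "w \<bullet> vecval X F f = (\<Sum>i\<in>UNIV. w $ Inl i * pval X i (inv f i) (F i (inv f i)) (Inl i))
      + (\<Sum>j\<in>UNIV. w $ Inr j * pval X (f j) j (F (f j) j) (Inr j))"
    unfolding inner_sum by (subst sum_plus) (simp add: vecval_def)
  also have "(\<Sum>i\<in>UNIV. w $ Inl i * pval X i (inv f i) (F i (inv f i)) (Inl i)) =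
      (\<Sum>j\<in>UNIV. w $ Inl (f j) * pval X (f j) (inv f (f j)) (F (f j) (inv f (f j))) (Inl (f j)))"
    using f by (intro sum.reindex_bij_betw[symmetric]) (simp add: bij_def bij_betw_def)
  also have "\<dots> = (\<Sum>j\<in>UNIV. w $ Inl (f j) * pval X (f j) j (F (f j) j) (Inl (f j)))"
    using f by (simp add: bij_is_inj)
  finally show ?thesis using v by (simp add: wval_dec sum.distrib)
qed

lemma valid_PiE: "\<sigma> \<in> Pi\<^sub>E (m_states (pmdp X i j)) (m_act (pmdp X i j)) \<Longrightarrow> valid_sched (pmdp X i j) (msched \<sigma>)"
  using fmdp.valid_msched[OF fm] by (auto simp: PiE_def Pi_def)

lemma alg2_ne: "alg2 X w \<noteq> {}"
proof -
  have "\<forall>p. \<exists>\<sigma>. \<sigma> \<in> Pi\<^sub>E (m_states (pmdp X (fst p) (snd p))) (m_act (pmdp X (fst p) (snd p))) \<and>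
     (\<forall>\<mu>. valid_sched (pmdp X (fst p) (snd p)) \<mu> \<longrightarrow> wval X (fst p) (snd p) w \<mu> \<le> wval X (fst p) (snd p) w (msched \<sigma>))"
    using md_exists by blast
  from choice[OF this] obtain S where S: "\<And>p. S p \<in> Pi\<^sub>E (m_states (pmdp X (fst p) (snd p))) (m_act (pmdp X (fst p) (snd p))) \<and>
     (\<forall>\<mu>. valid_sched (pmdp X (fst p) (snd p)) \<mu> \<longrightarrow> wval X (fst p) (snd p) w \<mu> \<le> wval X (fst p) (snd p) w (msched (S p)))"
    by blast
  define \<mu> where "\<mu> i j = msched (S (i, j))" for i j
  have v\<mu>: "valid_sched (pmdp X i j) (\<mu> i j)" for i j
    unfolding \<mu>_def using S[of "(i,j)"] by (intro valid_PiE) simp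
  have md: "memoryless_det (\<mu> i j)" for i j
    unfolding \<mu>_def memoryless_det_def msched_def by blast
  have opt: "\<forall>\<mu>'. valid_sched (pmdp X i j) \<mu>' \<longrightarrow> wval X i j w \<mu>' \<le> wval X i j w (\<mu> i j)" for i j
    unfolding \<mu>_def using S[of "(i,j)"] by simp
  define val where "val g = (\<Sum>j\<in>UNIV. wval X (g j) j w (\<mu> (g j) j))" for g :: "'n \<Rightarrow> 'n"
  define B where "B = {g :: 'n \<Rightarrow> 'n. bij g}"
  have Bfin: "finite B" by (rule finite_subset[OF _ fin_funs]) simp
  have Bne: "B \<noteq> {}" using bij_id by (auto simp: B_def)
  have "Max (val ` B) \<in> val ` B" using Bfin Bne by (intro Max_in) auto
  then obtain f0 where f0: "f0 \<in> B" "val f0 = Max (val ` B)" by auto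
  have "vecval X \<mu> f0 \<in> alg2 X w"
    unfolding alg2_iff
  proof (intro exI conjI allI impI)
    show "bij f0" using f0 by (simp add: B_def)
    fix g :: "'n \<Rightarrow> 'n" assume "bij g"
    then show "(\<Sum>j\<in>UNIV. wval X (g j) j w (\<mu> (g j) j)) \<le> (\<Sum>j\<in>UNIV. wval X (f0 j) j w (\<mu> (f0 j) j))"
      using f0 Bfin unfolding val_def[symmetric] by (auto simp: B_def)
  qed (use v\<mu> md opt in auto)
  then show ?thesis by blast
qed

lemma alg2_C0: "r \<in> alg2 X w \<Longrightarrow> r \<in> C0 X"
  unfolding alg2_iff C0_iff
  by (elim exE conjE, intro exI[of _ "return_pmf _"] exI[of _ "\<lambda>_. _"]) auto

lemma C0_le:
  assumes w: "\<And>k. 0 \<le> w $ k" and r: "r \<in> alg2 X w" and x: "x \<in> C0 X"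
  shows "w \<bullet> x \<le> w \<bullet> r"
proof -
  obtain \<mu> f0 where v\<mu>: "\<And>i j. valid_sched (pmdp X i j) (\<mu> i j)"
    and opt: "\<And>i j \<mu>'. valid_sched (pmdp X i j) \<mu>' \<Longrightarrow> wval X i j w \<mu>' \<le> wval X i j w (\<mu> i j)"
    and f0: "bij f0" and best: "\<And>g. bij g \<Longrightarrow> (\<Sum>j\<in>UNIV. wval X (g j) j w (\<mu> (g j) j)) \<le> (\<Sum>j\<in>UNIV. wval X (f0 j) j w (\<mu> (f0 j) j))"
    and rr: "r = vecval X \<mu> f0"
    using r unfolding alg2_iff by blast
  obtain p \<sigma> where xx: "x = (\<chi> k. measure_pmf.expectation p (\<lambda>f. vecval X (\<sigma> f) f $ k))"
    and pb: "\<forall>f\<in>set_pmf p. bij f" and v\<sigma>: "\<And>f i j. valid_sched (pmdp X i j) (\<sigma> f i j)"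
    using x unfolding C0_iff by blast
  have wr: "w \<bullet> r = (\<Sum>j\<in>UNIV. wval X (f0 j) j w (\<mu> (f0 j) j))"
    unfolding rr by (rule w_vecval[OF f0 v\<mu>])
  have xk: "x $ k = (\<Sum>f\<in>UNIV. pmf p f * vecval X (\<sigma> f) f $ k)" for k
    unfolding xx by (simp add: exp_as_sum[OF fin_funs])
  have "w \<bullet> x = (\<Sum>k\<in>UNIV. \<Sum>f\<in>UNIV. pmf p f * (w $ k * vecval X (\<sigma> f) f $ k))"
    unfolding inner_sum xk by (simp add: sum_distrib_left mult.left_commute)
  also have "\<dots> = (\<Sum>f\<in>UNIV. \<Sum>k\<in>UNIV. pmf p f * (w $ k * vecval X (\<sigma> f) f $ k))"
    by (rule sum.swap)
  also have "\<dots> = (\<Sum>f\<in>UNIV. pmf p f * (w \<bullet> vecval X (\<sigma> f) f))"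
    unfolding inner_sum by (simp add: sum_distrib_left)
  also have "\<dots> \<le> (\<Sum>f\<in>UNIV. pmf p f * (w \<bullet> r))"
  proof (intro sum_mono)
    fix f :: "'n \<Rightarrow> 'n"
    show "pmf p f * (w \<bullet> vecval X (\<sigma> f) f) \<le> pmf p f * (w \<bullet> r)"
    proof (cases "f \<in> set_pmf p")
      case True
      then have bf: "bij f" using pb by auto
      have "w \<bullet> vecval X (\<sigma> f) f = (\<Sum>j\<in>UNIV. wval X (f j) j w (\<sigma> f (f j) j))"
        by (rule w_vecval[OF bf v\<sigma>])
      also have "\<dots> \<le> (\<Sum>j\<in>UNIV. wval X (f j) j w (\<mu> (f j) j))"
        by (intro sum_mono opt v\<sigma>)
      also have "\<dots> \<le> w \<bullet> r" unfolding wr by (rule best[OF bf])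
      finally show ?thesis by (intro mult_left_mono) auto
    next
      case False then show ?thesis by (simp add: set_pmf_eq)
    qed
  qed
  also have "\<dots> = w \<bullet> r"
    by (simp add: sum_distrib_right[symmetric] sum_pmf_eq_1[OF fin_funs])
  finally show ?thesis .
qed

lemma Cset_le:
  assumes w: "\<And>k. 0 \<le> w $ k" and r: "r \<in> alg2 X w" and c: "c \<in> Cset X"
  shows "w \<bullet> c \<le> w \<bullet> r"
proof -
  obtain x where x: "x \<in> C0 X" "\<And>k. c $ k \<le> x $ k" using c unfolding Cset_def by blast
  have "w \<bullet> c \<le> w \<bullet> x" unfolding inner_sum by (intro sum_mono mult_left_mono x w)
  also have "\<dots> \<le> w \<bullet> r" by (rule C0_le[OF w r x(1)])
  finally show ?thesis .
qed

lemma pval_mix: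
  assumes c: "0 \<le> c" "c \<le> 1" and v1: "valid_sched (pmdp X i j) \<mu>1" and v2: "valid_sched (pmdp X i j) \<mu>2"
  shows "pval X i j (mixs c \<mu>1 \<mu>2) k = c * pval X i j \<mu>1 k + (1 - c) * pval X i j \<mu>2 k"
  unfolding pval_def by (rule fmdp.kuhn_lim[OF fm c v1 v2 conv_all[OF v1] conv_all[OF v2]])

lemma vec_mix:
  assumes c: "0 \<le> c" "c \<le> 1" and v1: "\<And>i j. valid_sched (pmdp X i j) (F1 i j)" and v2: "\<And>i j. valid_sched (pmdp X i j) (F2 i j)"
  shows "vecval X (\<lambda>i j. mixs c (F1 i j) (F2 i j)) f $ k = c * vecval X F1 f $ k + (1 - c) * vecval X F2 f $ k"
  by (cases k) (simp_all add: vecval_def pval_mix[OF c v1 v2])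

lemma C0_mix:
  assumes x1: "x1 \<in> C0 X" and x2: "x2 \<in> C0 X" and c: "0 \<le> c" "c \<le> 1"
  shows "c *\<^sub>R x1 + (1 - c) *\<^sub>R x2 \<in> C0 X"
proof -
  obtain p1 \<sigma>1 where xx1: "x1 = (\<chi> k. measure_pmf.expectation p1 (\<lambda>f. vecval X (\<sigma>1 f) f $ k))"
    and pb1: "\<forall>f\<in>set_pmf p1. bij f" and v1: "\<And>f i j. valid_sched (pmdp X i j) (\<sigma>1 f i j)"
    using x1 unfolding C0_iff by blast
  obtain p2 \<sigma>2 where xx2: "x2 = (\<chi> k. measure_pmf.expectation p2 (\<lambda>f. vecval X (\<sigma>2 f) f $ k))"
    and pb2: "\<forall>f\<in>set_pmf p2. bij f" and v2: "\<And>f i j. valid_sched (pmdp X i j) (\<sigma>2 f i j)"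
    using x2 unfolding C0_iff by blast
  define D where "D f = c * pmf p1 f + (1 - c) * pmf p2 f" for f
  define c' where "c' f = (if D f = 0 then 0 else c * pmf p1 f / D f)" for f
  have c'01: "0 \<le> c' f" "c' f \<le> 1" for f
  proof -
    have "0 \<le> c * pmf p1 f" "0 \<le> (1-c) * pmf p2 f" using c by simp_all
    then show "0 \<le> c' f" "c' f \<le> 1" by (auto simp: c'_def D_def divide_le_eq)
  qed
  define \<sigma> where "\<sigma> f i j = mixs (c' f) (\<sigma>1 f i j) (\<sigma>2 f i j)" for f i j
  define p where "p = mixp c p1 p2"
  have pp: "pmf p f = D f" for f unfolding p_def D_def by (rule pmf_mixp[OF c])
  have key: "pmf p f * vecval X (\<sigma> f) f $ k = c * (pmf p1 f * vecval X (\<sigma>1 f) f $ k) + (1 - c) * (pmf p2 f * vecval X (\<sigma>2 f) f $ k)" for f k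
  proof -
    have vm: "vecval X (\<sigma> f) f $ k = c' f * vecval X (\<sigma>1 f) f $ k + (1 - c' f) * vecval X (\<sigma>2 f) f $ k"
      unfolding \<sigma>_def by (rule vec_mix[OF c'01 v1 v2])
    show ?thesis
    proof (cases "D f = 0")
      case True
      have "c * pmf p1 f = 0" "(1 - c) * pmf p2 f = 0"
        using True c unfolding D_def by (smt (verit) mult_nonneg_nonneg pmf_nonneg)+
      then have z1: "c * (pmf p1 f * a) = 0" and z2: "(1 - c) * (pmf p2 f * a) = 0" for a
        by (metis mult.assoc mult_zero_left)+
      then show ?thesis unfolding pp True z1 z2 by simp
    next
      case False
      have h1: "D f * c' f = c * pmf p1 f" and h2: "D f * (1 - c' f) = (1 - c) * pmf p2 f"
        using False by (auto simp: c'_def D_def field_simps)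
      have e: "D f * (c' f * a + (1 - c' f) * b) = (D f * c' f) * a + (D f * (1 - c' f)) * b" for a b
        by (simp add: algebra_simps)
      show ?thesis unfolding pp vm e h1 h2 by (simp add: mult.assoc)
    qed
  qed
  show ?thesis unfolding C0_iff
  proof (intro exI conjI allI)
    show "c *\<^sub>R x1 + (1 - c) *\<^sub>R x2 = (\<chi> k. measure_pmf.expectation p (\<lambda>f. vecval X (\<sigma> f) f $ k))"
      unfolding xx1 xx2
      by (simp add: vec_eq_iff exp_as_sum[OF fin_funs] key sum.distrib sum_distrib_left)
    show "\<forall>f\<in>set_pmf p. bij f" using set_mixp[of c p1 p2] pb1 pb2 unfolding p_def by blast
    fix f i j show "valid_sched (pmdp X i j) (\<sigma> f i j)"
      unfolding \<sigma>_def by (rule fmdp.valid_mixs[OF fm v1 v2])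
  qed
qed

lemma Cset_convex: "convex (Cset X)"
  unfolding convex_def
proof (intro ballI allI impI)
  fix x y :: "real^('n+'n)" and u v :: real assume x: "x \<in> Cset X" and y: "y \<in> Cset X" and uv: "0 \<le> u" "0 \<le> v" "u + v = 1"
  obtain x' where x': "x' \<in> C0 X" "\<And>k. x $ k \<le> x' $ k" using x unfolding Cset_def by blast
  obtain y' where y': "y' \<in> C0 X" "\<And>k. y $ k \<le> y' $ k" using y unfolding Cset_def by blast
  have v: "v = 1 - u" using uv by simp
  have "u *\<^sub>R x' + (1 - u) *\<^sub>R y' \<in> C0 X" using uv by (intro C0_mix x' y') auto
  moreover have "(u *\<^sub>R x + v *\<^sub>R y) $ k \<le> (u *\<^sub>R x' + (1 - u) *\<^sub>R y') $ k" for k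
    using x'(2)[of k] y'(2)[of k] uv v by (simp add: add_mono mult_left_mono)
  ultimately show "u *\<^sub>R x + v *\<^sub>R y \<in> Cset X" unfolding Cset_def by blast
qed

lemma C0_Cset: "C0 X \<subseteq> Cset X" unfolding Cset_def by auto

lemma Cset_ne: "Cset X \<noteq> {}"
  using alg2_ne[of 0] alg2_C0 C0_Cset by blast

lemma Cset_down: "c \<in> Cset X \<Longrightarrow> (\<And>k. u $ k \<le> c $ k) \<Longrightarrow> u \<in> Cset X"
proof -
  assume c: "c \<in> Cset X" and u: "\<And>k. u $ k \<le> c $ k"
  obtain x where "x \<in> C0 X" "\<And>k. c $ k \<le> x $ k" using c unfolding Cset_def by blast
  then show "u \<in> Cset X" unfolding Cset_def using u order_trans by blast
qed

definition "SS = Pi\<^sub>E UNIV (\<lambda>i. Pi\<^sub>E UNIV (\<lambda>j. Pi\<^sub>E (m_states (pmdp X i j)) (m_act (pmdp X i j))))"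
definition "Rset = (\<lambda>(\<sigma>, f). vecval X (\<lambda>i j. msched (\<sigma> i j)) f) ` (SS \<times> UNIV)"

lemma Rset_fin: "finite Rset"
proof -
  have "finite SS" unfolding SS_def
    by (intro finite_PiE) (auto intro: fmdp.St_fin[OF fm] fmdp.Act_fin[OF fm])
  then show ?thesis unfolding Rset_def by (intro finite_imageI finite_cartesian_product) auto
qed

lemma alg2_R: "r \<in> alg2 X w \<Longrightarrow> r \<in> Rset"
proof -
  assume "r \<in> alg2 X w"
  then obtain \<mu> f where v\<mu>: "\<And>i j. valid_sched (pmdp X i j) (\<mu> i j)" and md: "\<And>i j. memoryless_det (\<mu> i j)"
    and rr: "r = vecval X \<mu> f" unfolding alg2_iff by blast
  have "\<forall>p. \<exists>\<sigma>. \<forall>h. \<mu> (fst p) (snd p) h = return_pmf (\<sigma> (cur h))" using md unfolding memoryless_det_def by blast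
  from choice[OF this] obtain S where S: "\<And>i j h. \<mu> i j h = return_pmf (S (i, j) (cur h))" by force
  define \<sigma> where "\<sigma> i j = restrict (S (i, j)) (m_states (pmdp X i j))" for i j
  have \<sigma>S: "\<sigma> \<in> SS"
  proof -
    have "S (i, j) s \<in> m_act (pmdp X i j) s" if "s \<in> m_states (pmdp X i j)" for i j s
      using fmdp.sched_sub[OF fm v\<mu>[of i j], of "(s, [])"] that by (simp add: S)
    then show ?thesis unfolding SS_def \<sigma>_def by auto
  qed
  have eq: "pval X i j (\<mu> i j) k = pval X i j (msched (\<sigma> i j)) k" for i j k
  proof -
    have vm: "valid_sched (pmdp X i j) (msched (\<sigma> i j))"
      using \<sigma>S by (intro valid_PiE) (simp add: SS_def PiE_iff)
    show ?thesis unfolding pval_def exp_rew_def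
      by (subst fmdp.ER_cong_sched[OF fm v\<mu> vm]) (auto simp: S msched_def \<sigma>_def fmdp.init_St[OF fm])
  qed
  have "r = vecval X (\<lambda>i j. msched (\<sigma> i j)) f" unfolding rr vecval_def eq ..
  then show "r \<in> Rset" unfolding Rset_def using \<sigma>S by auto
qed

end

locale pd =
  fixes Mm :: "real^'k^'k"
  assumes sym: "transpose Mm = Mm" and pos: "\<forall>v. v \<noteq> 0 \<longrightarrow> v \<bullet> (Mm *v v) > 0"
begin

definition "q v = v \<bullet> (Mm *v v)"

lemma q_nonneg: "0 \<le> q v"
  using pos by (cases "v = 0") (auto simp: q_def less_imp_le)

lemma q_zero: "q v = 0 \<longleftrightarrow> v = 0"
  using pos by (auto simp: q_def)

lemma symm: "u \<bullet> (Mm *v v) = v \<bullet> (Mm *v u)"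
proof -
  have "u \<bullet> (Mm *v v) = (u v* Mm) \<bullet> v" by (simp add: dot_lmul_matrix)
  also have "\<dots> = (Mm *v u) \<bullet> v" by (metis sym transpose_matrix_vector)
  finally show ?thesis by (simp add: inner_commute)
qed

lemma q_add: "q (a + b) = q a + 2 * (a \<bullet> (Mm *v b)) + q b"
  unfolding q_def using symm[of b a] by (simp add: matrix_vector_right_distrib inner_add_left inner_add_right)

lemma q_diff: "q (a - b) = q a - 2 * (a \<bullet> (Mm *v b)) + q b"
  unfolding q_def using symm[of b a] by (simp add: matrix_vector_mult_diff_distrib inner_diff_left inner_diff_right)

lemma q_scale: "q (c *\<^sub>R v) = c^2 * q v"
  unfolding q_def by (simp add: matrix_vector_mult_scaleR power2_eq_square)

lemma nM: "normM Mm v = sqrt (q v)" by (simp add: normM_def q_def)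

lemma nM_le: "normM Mm a \<le> normM Mm b \<longleftrightarrow> q a \<le> q b"
  by (simp add: nM)

lemma nM_nonneg: "0 \<le> normM Mm v" by (simp add: nM q_nonneg)

lemma nM_zero_iff: "normM Mm v = 0 \<longleftrightarrow> v = 0"
  using q_nonneg[of v] by (simp add: nM q_zero)

lemma q_cont: "continuous_on S q"
  unfolding q_def
  by (intro continuous_on_inner continuous_on_id linear_continuous_on)
     (simp add: linear_linear matrix_vector_mul_linear)

lemma coercive: "\<exists>m>0. \<forall>v. m * (norm v)^2 \<le> q v"
proof -
  have ne: "sphere (0::real^'k) 1 \<noteq> {}"
  proof -
    obtain k :: 'k where True by simp
    have "axis k (1::real) \<in> sphere 0 1" by simp
    then show ?thesis by blast
  qed
  obtain v0 where v0: "v0 \<in> sphere 0 1" "\<And>y. y \<in> sphere 0 1 \<Longrightarrow> q v0 \<le> q y"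
    using continuous_attains_inf[OF compact_sphere ne q_cont] by blast
  have "v0 \<noteq> 0" using v0(1) by auto
  then have m: "q v0 > 0" using pos by (auto simp: q_def)
  show ?thesis
  proof (intro exI[of _ "q v0"] conjI allI m)
    fix v :: "real^'k"
    show "q v0 * (norm v)^2 \<le> q v"
    proof (cases "v = 0")
      case True then show ?thesis by (simp add: q_def)
    next
      case False
      have "q v0 \<le> q ((1 / norm v) *\<^sub>R v)" using False by (intro v0(2)) simp
      also have "\<dots> = q v / (norm v)^2" by (simp add: q_scale power_divide)
      finally show ?thesis using False by (simp add: le_divide_eq)
    qed
  qed
qed

lemma exists_min:
  assumes S: "closed S" "S \<noteq> {}"
  shows "\<exists>x\<in>S. \<forall>y\<in>S. q (t - x) \<le> q (t - y)"
proof -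
  obtain y0 where y0: "y0 \<in> S" using S by blast
  obtain m where m: "m > 0" "\<And>v. m * (norm v)^2 \<le> q v" using coercive by blast
  define S' where "S' = S \<inter> {y. q (t - y) \<le> q (t - y0)}"
  have cS': "closed S'" unfolding S'_def
    by (intro closed_Int S closed_Collect_le continuous_on_const continuous_on_compose2[OF q_cont] continuous_intros) auto
  have bS': "bounded S'"
  proof -
    have "norm (t - y) \<le> sqrt (q (t - y0) / m)" if "y \<in> S'" for y
    proof -
      have "m * (norm (t - y))^2 \<le> q (t - y0)" using m(2)[of "t - y"] that by (auto simp: S'_def)
      then have "(norm (t - y))^2 \<le> q (t - y0) / m" using m(1) by (simp add: field_simps)
      then show ?thesis by (simp add: real_le_rsqrt)
    qed
    note R = this
    show ?thesis unfolding bounded_iff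
    proof (intro exI ballI)
      fix y assume y: "y \<in> S'"
      have "norm y = norm (t - (t - y))" by simp
      also have "\<dots> \<le> norm t + norm (t - y)" by (rule norm_triangle_ineq4)
      also have "\<dots> \<le> norm t + sqrt (q (t - y0) / m)" using R[OF y] by simp
      finally show "norm y \<le> norm t + sqrt (q (t - y0) / m)" .
    qed
  qed
  have ne: "S' \<noteq> {}" using y0 by (auto simp: S'_def)
  have cpt: "compact S'" using cS' bS' by (simp add: compact_eq_bounded_closed)
  have cont: "continuous_on S' (\<lambda>y. q (t - y))"
    by (rule continuous_on_compose2[OF q_cont[of UNIV]]) (auto intro: continuous_intros)
  obtain x where x: "x \<in> S'" "\<And>y. y \<in> S' \<Longrightarrow> q (t - x) \<le> q (t - y)"
    using continuous_attains_inf[OF cpt ne cont] by blast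
  show ?thesis
  proof (intro bexI ballI)
    show "x \<in> S" using x by (simp add: S'_def)
    fix y assume "y \<in> S"
    show "q (t - x) \<le> q (t - y)"
    proof (cases "y \<in> S'")
      case True then show ?thesis by (rule x(2))
    next
      case False then show ?thesis using \<open>y \<in> S\<close> x(2)[OF x(1)] x(1) by (auto simp: S'_def)
    qed
  qed
qed

lemma variational:
  assumes C: "convex C" and x: "x \<in> C" and min: "\<And>y. y \<in> C \<Longrightarrow> q (t - x) \<le> q (t - y)" and y: "y \<in> C"
  shows "(t - x) \<bullet> (Mm *v (y - x)) \<le> 0"
proof (rule ccontr)
  define d where "d = (t - x) \<bullet> (Mm *v (y - x))"
  define Q where "Q = q (y - x)"
  assume "\<not> (t - x) \<bullet> (Mm *v (y - x)) \<le> 0"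
  then have d: "d > 0" by (simp add: d_def)
  have Q: "Q \<ge> 0" by (simp add: Q_def q_nonneg)
  have key: "2 * s * d \<le> s^2 * Q" if s: "0 < s" "s \<le> 1" for s
  proof -
    have e1: "x + s *\<^sub>R (y - x) = (1 - s) *\<^sub>R x + s *\<^sub>R y" by (simp add: algebra_simps)
    have "x + s *\<^sub>R (y - x) \<in> C"
      unfolding e1 using convexD_alt[OF C x y, of s] s by simp
    then have "q (t - x) \<le> q (t - (x + s *\<^sub>R (y - x)))" by (rule min)
    moreover have "t - (x + s *\<^sub>R (y - x)) = (t - x) - s *\<^sub>R (y - x)" by (simp add: algebra_simps)
    ultimately have "q (t - x) \<le> q ((t - x) - s *\<^sub>R (y - x))" by simp
    also have "\<dots> = q (t - x) - 2 * ((t - x) \<bullet> (Mm *v (s *\<^sub>R (y - x)))) + q (s *\<^sub>R (y - x))"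
      by (rule q_diff)
    also have "\<dots> = q (t - x) - 2 * s * d + s^2 * Q"
      by (simp add: q_scale matrix_vector_mult_scaleR d_def Q_def)
    finally show ?thesis by simp
  qed
  define s where "s = min 1 (d / (Q + 1))"
  have s: "0 < s" "s \<le> 1" using d Q by (auto simp: s_def)
  have "2 * s * d \<le> s^2 * Q" by (rule key[OF s])
  then have "2 * d \<le> s * Q" using s by (simp add: power2_eq_square mult.assoc)
  also have "\<dots> \<le> d / (Q + 1) * Q" using Q s by (intro mult_right_mono) (auto simp: s_def)
  also have "\<dots> < d" using d Q by (simp add: field_simps)
  finally show False using d by simp
qed

lemma halfspace:
  assumes c: "c > 0" and w: "w = (1 / c) *\<^sub>R (Mm *v (t - x))" and z: "w \<bullet> z \<le> w \<bullet> x"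
  shows "q (t - x) + q (x - z) \<le> q (t - z)"
proof -
  have "(t - x) \<bullet> (Mm *v (x - z)) = c * (w \<bullet> (x - z))"
    using c by (simp add: w symm[of "t - x"] inner_commute)
  also have "\<dots> \<ge> 0" using c z by (simp add: inner_diff_right)
  finally have nn: "0 \<le> (t - x) \<bullet> (Mm *v (x - z))" .
  have "q (t - z) = q ((t - x) + (x - z))" by simp
  also have "\<dots> = q (t - x) + 2 * ((t - x) \<bullet> (Mm *v (x - z))) + q (x - z)" by (rule q_add)
  finally show ?thesis using nn by linarith
qed

lemma norm1_pos: "v \<noteq> 0 \<Longrightarrow> norm1 (Mm *v v) > 0"
proof -
  assume v: "v \<noteq> 0"
  have "Mm *v v \<noteq> 0"
  proof
    assume "Mm *v v = 0"
    then have "v \<bullet> (Mm *v v) = 0" by simp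
    with pos v show False by auto
  qed
  then have "\<exists>k. (Mm *v v) $ k \<noteq> 0" by (simp add: vec_eq_iff)
  then obtain k where "(Mm *v v) $ k \<noteq> 0" by blast
  then have "0 < \<bar>(Mm *v v) $ k\<bar>" by simp
  also have "\<dots> \<le> norm1 (Mm *v v)" unfolding norm1_def by (rule member_le_sum) auto
  finally show ?thesis .
qed

end

lemma norm1_nonneg: "0 \<le> norm1 v" unfolding norm1_def by (simp add: sum_nonneg)

lemma downc_eq: "downc \<Phi> = (\<Union>x\<in>convex hull \<Phi>. \<Union>y\<in>{v::real^'k. \<forall>k. v $ k \<le> 0}. {x + y})"
proof (intro set_eqI iffI)
  fix u assume "u \<in> downc \<Phi>"
  then obtain x where x: "x \<in> convex hull \<Phi>" "\<forall>k. u $ k \<le> x $ k" unfolding downc_def by blast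
  then show "u \<in> (\<Union>x\<in>convex hull \<Phi>. \<Union>y\<in>{v::real^'k. \<forall>k. v $ k \<le> 0}. {x + y})"
    by (intro UN_I[OF x(1)] UN_I[of "u - x"]) auto
next
  fix u assume "u \<in> (\<Union>x\<in>convex hull \<Phi>. \<Union>y\<in>{v::real^'k. \<forall>k. v $ k \<le> 0}. {x + y})"
  then show "u \<in> downc \<Phi>" unfolding downc_def by force
qed

lemma downc_closed: "finite \<Phi> \<Longrightarrow> closed (downc (\<Phi> :: (real^'k) set))"
proof -
  assume "finite \<Phi>"
  have e: "{v::real^'k. \<forall>k. v $ k \<le> 0} = (\<Inter>k. {v. axis k 1 \<bullet> v \<le> 0})"
    by (auto simp: inner_axis inner_commute)
  have "closed {v::real^'k. \<forall>k. v $ k \<le> 0}"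
    unfolding e by (intro closed_INT ballI closed_halfspace_le)
  then show ?thesis unfolding downc_eq
    by (intro compact_closed_sums finite_imp_compact_convex_hull \<open>finite \<Phi>\<close>)
qed

lemma downc_convex: "convex (downc (\<Phi> :: (real^'k) set))"
proof (rule convexI)
  fix x y :: "real^'k" and u v :: real
  assume x: "x \<in> downc \<Phi>" and y: "y \<in> downc \<Phi>" and uv: "0 \<le> u" "0 \<le> v" "u + v = 1"
  obtain x' where x': "x' \<in> convex hull \<Phi>" "\<forall>k. x $ k \<le> x' $ k" using x unfolding downc_def by blast
  obtain y' where y': "y' \<in> convex hull \<Phi>" "\<forall>k. y $ k \<le> y' $ k" using y unfolding downc_def by blast
  have "u *\<^sub>R x' + v *\<^sub>R y' \<in> convex hull \<Phi>"
    using convex_convex_hull[of \<Phi>] x'(1) y'(1) uv unfolding convex_def by blast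
  moreover have "\<forall>k. (u *\<^sub>R x + v *\<^sub>R y) $ k \<le> (u *\<^sub>R x' + v *\<^sub>R y') $ k"
    using x'(2) y'(2) uv by (simp add: add_mono mult_left_mono)
  ultimately show "u *\<^sub>R x + v *\<^sub>R y \<in> downc \<Phi>" unfolding downc_def by blast
qed

lemma downc_sup: "\<Phi> \<subseteq> downc \<Phi>"
  unfolding downc_def by (auto intro: hull_inc)

lemma downc_mono: "\<Phi> \<subseteq> \<Psi> \<Longrightarrow> downc \<Phi> \<subseteq> downc \<Psi>"
  unfolding downc_def using hull_mono[of \<Phi> \<Psi> convex] by blast

lemma downc_axis: "x \<in> downc \<Phi> \<Longrightarrow> x - axis k 1 \<in> downc \<Phi>"
proof -
  assume "x \<in> downc \<Phi>"
  then obtain x' where x': "x' \<in> convex hull \<Phi>" "\<forall>j. x $ j \<le> x' $ j" unfolding downc_def by blast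
  have "\<forall>j. (x - axis k 1) $ j \<le> x' $ j"
  proof
    fix j show "(x - axis k 1) $ j \<le> x' $ j" using x'(2)[rule_format, of j] by (cases "j = k") (auto simp: axis_def)
  qed
  then show ?thesis using x'(1) unfolding downc_def by blast
qed

definition Pol :: "((real^'k) \<times> (real^'k)) set \<Rightarrow> (real^'k) set" where
  "Pol L = {z. \<forall>(w', r')\<in>L. w' \<bullet> z \<le> w' \<bullet> r'}"

lemma Pol_closed: "closed (Pol L)"
proof -
  have "Pol L = (\<Inter>p\<in>L. {z. fst p \<bullet> z \<le> fst p \<bullet> snd p})" unfolding Pol_def by (rule set_eqI) (simp add: case_prod_beta)
  then show ?thesis by (simp add: closed_INT closed_halfspace_le)
qed


locale main = inst_ctx X + pd Mm
  for X :: "('n::finite,'s,'a,'q,'l) inst" and Mm :: "real^('n+'n)^('n+'n)" +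
  fixes t :: "real^('n+'n)" and eps :: real and i0 :: 'n
  assumes eps: "eps \<ge> 0"
begin

definition Inv :: "('n+'n) astate \<Rightarrow> bool" where
  "Inv S \<longleftrightarrow> finite (phi S) \<and> phi S \<subseteq> Rset \<and> phi S \<subseteq> Cset X
     \<and> (\<forall>p\<in>lam S. (\<forall>k. 0 \<le> fst p $ k) \<and> snd p \<in> alg2 X (fst p))
     \<and> tdown S \<in> Pol (lam S) \<and> (\<forall>z\<in>Pol (lam S). normM Mm (t - tdown S) \<le> normM Mm (t - z))
     \<and> (\<forall>u. tup S = Some u \<longrightarrow> u \<in> downc (phi S))
     \<and> (phi S = {} \<longrightarrow> tup S = None \<and> (\<forall>k. 0 \<le> wt S $ k))"

lemma Pol_insert: "Pol (insert (w, r) L) = Pol L \<inter> {z. w \<bullet> z \<le> w \<bullet> r}"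
  unfolding Pol_def by auto

lemma Cset_Pol: "Inv S \<Longrightarrow> Cset X \<subseteq> Pol (lam S)"
  unfolding Inv_def Pol_def using Cset_le by fastforce

lemma downc_Cset: "\<Phi> \<subseteq> Cset X \<Longrightarrow> downc \<Phi> \<subseteq> Cset X"
proof
  fix u assume P: "\<Phi> \<subseteq> Cset X" and "u \<in> downc \<Phi>"
  then obtain x where x: "x \<in> convex hull \<Phi>" "\<forall>k. u $ k \<le> x $ k" unfolding downc_def by blast
  have "convex hull \<Phi> \<subseteq> Cset X" by (rule hull_minimal[of \<Phi> "Cset X" convex, OF P Cset_convex])
  then show "u \<in> Cset X" using x Cset_down by blast
qed

lemma tdown_t: "Inv S \<Longrightarrow> t \<in> Cset X \<Longrightarrow> tdown S = t"
proof -
  assume I: "Inv S" and t: "t \<in> Cset X"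
  have "t \<in> Pol (lam S)" using Cset_Pol[OF I] t by blast
  then have "normM Mm (t - tdown S) \<le> normM Mm (t - t)" using I unfolding Inv_def by blast
  then have "q (t - tdown S) \<le> 0" by (simp add: nM_le q_def)
  then have "q (t - tdown S) = 0" using q_nonneg[of "t - tdown S"] by linarith
  then show ?thesis by (simp add: q_zero)
qed

lemma w_nonneg:
  assumes x: "x \<in> downc \<Phi>" and min: "\<forall>y\<in>downc \<Phi>. normM Mm (t - x) \<le> normM Mm (t - y)"
  shows "0 \<le> ((1 / norm1 (Mm *v (t - x))) *\<^sub>R (Mm *v (t - x))) $ k"
proof -
  have "(t - x) \<bullet> (Mm *v ((x - axis k 1) - x)) \<le> 0"
    by (rule variational[OF downc_convex x _ downc_axis[OF x]]) (use min in \<open>simp add: nM_le\<close>)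
  moreover have "Mm *v ((x - axis k 1) - x) = - (Mm *v axis k 1)"
    using matrix_vector_mult_diff_distrib[of Mm 0 "axis k 1"] by simp
  ultimately have "0 \<le> (t - x) \<bullet> (Mm *v axis k 1)" by simp
  also have "(t - x) \<bullet> (Mm *v axis k 1) = (Mm *v (t - x)) $ k"
    by (simp add: symm[of "t - x"] inner_axis' )
  finally show ?thesis using norm1_nonneg[of "Mm *v (t - x)"] by simp
qed

lemma Inv_init: "Inv (alg1_init i0 t)"
proof -
  have "normM Mm 0 = 0" by (simp add: normM_def)
  then show ?thesis unfolding Inv_def alg1_init_def Pol_def by (simp add: nM_nonneg)
qed

lemma step_Inv:
  assumes I: "Inv S" and st: "alg1_step X Mm t eps S S'"
  shows "Inv S'"
proof -
  obtain u w r z where U: "if phi S = {} then u = tup S \<and> w = wt S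
        else (\<exists>x. x \<in> downc (phi S) \<and>
                  (\<forall>y\<in>downc (phi S). normM Mm (t - x) \<le> normM Mm (t - y)) \<and>
                  u = Some x \<and>
                  w = (1 / norm1 (Mm *v (t - x))) *\<^sub>R (Mm *v (t - x)))"
    and r: "r \<in> alg2 X w"
    and Z: "if w \<bullet> r < w \<bullet> tdown S
        then (\<forall>(w',r')\<in>insert (w,r) (lam S). w' \<bullet> z \<le> w' \<bullet> r') \<and>
             (\<forall>z'. (\<forall>(w',r')\<in>insert (w,r) (lam S). w' \<bullet> z' \<le> w' \<bullet> r') \<longrightarrow>
                   normM Mm (t - z) \<le> normM Mm (t - z'))
        else z = tdown S"
    and S': "S' = \<lparr> tup = u, tdown = z, phi = insert r (phi S), lam = insert (w,r) (lam S), wt = w \<rparr>"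
    using st unfolding alg1_step_def by blast
  have w0: "\<forall>k. 0 \<le> w $ k"
  proof (cases "phi S = {}")
    case True then show ?thesis using U I unfolding Inv_def by simp
  next
    case False
    then obtain x where "x \<in> downc (phi S)" "\<forall>y\<in>downc (phi S). normM Mm (t - x) \<le> normM Mm (t - y)"
      "w = (1 / norm1 (Mm *v (t - x))) *\<^sub>R (Mm *v (t - x))" using U by auto
    then show ?thesis using w_nonneg by blast
  qed
  have u: "\<forall>u'. u = Some u' \<longrightarrow> u' \<in> downc (phi S)"
  proof (cases "phi S = {}")
    case True then show ?thesis using U I unfolding Inv_def by simp
  next
    case False then show ?thesis using U by auto
  qed
  have zP: "z \<in> Pol (insert (w, r) (lam S)) \<and> (\<forall>z'\<in>Pol (insert (w, r) (lam S)). normM Mm (t - z) \<le> normM Mm (t - z'))"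
  proof (cases "w \<bullet> r < w \<bullet> tdown S")
    case True then show ?thesis using Z unfolding Pol_def by auto
  next
    case False
    then have "z = tdown S" using Z by simp
    then show ?thesis using I False unfolding Inv_def Pol_insert by auto
  qed
  have rC: "r \<in> Cset X" using alg2_C0[OF r] C0_Cset by blast
  show ?thesis unfolding Inv_def S'
    using I alg2_R[OF r] rC w0 r u zP downc_mono[of "phi S" "insert r (phi S)"] unfolding Inv_def
    by auto
qed

lemma reach_Inv: "(alg1_step X Mm t eps)\<^sup>*\<^sup>* (alg1_init i0 t) S \<Longrightarrow> Inv S"
  by (induction rule: rtranclp_induct) (auto intro: Inv_init step_Inv)

end

context main
begin

lemma Pol_ne: "Inv S \<Longrightarrow> (\<forall>k. 0 \<le> w $ k) \<Longrightarrow> r \<in> alg2 X w \<Longrightarrow> Pol (insert (w, r) (lam S)) \<noteq> {}"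
proof -
  assume I: "Inv S" and w: "\<forall>k. 0 \<le> w $ k" and r: "r \<in> alg2 X w"
  obtain c where c: "c \<in> Cset X" using Cset_ne by blast
  have "c \<in> Pol (lam S)" using Cset_Pol[OF I] c by blast
  moreover have "w \<bullet> c \<le> w \<bullet> r" using Cset_le[of w r c] w r c by blast
  ultimately show ?thesis unfolding Pol_insert by blast
qed

lemma min_nM:
  assumes "closed A" "A \<noteq> {}"
  shows "\<exists>x\<in>A. \<forall>y\<in>A. normM Mm (t - x) \<le> normM Mm (t - y)"
  using exists_min[OF assms, of t] by (simp add: nM_le)

lemma step_exists:
  assumes I: "Inv S" and g: "alg1_guard Mm eps S"
  shows "\<exists>S'. alg1_step X Mm t eps S S'"
proof -
  have "\<exists>u w. (if phi S = {} then u = tup S \<and> w = wt S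
        else (\<exists>x. x \<in> downc (phi S) \<and>
                  (\<forall>y\<in>downc (phi S). normM Mm (t - x) \<le> normM Mm (t - y)) \<and>
                  u = Some x \<and>
                  w = (1 / norm1 (Mm *v (t - x))) *\<^sub>R (Mm *v (t - x)))) \<and> (\<forall>k. 0 \<le> w $ k)"
  proof (cases "phi S = {}")
    case True then show ?thesis using I unfolding Inv_def by auto
  next
    case False
    have "closed (downc (phi S))" using I unfolding Inv_def by (simp add: downc_closed)
    moreover have "downc (phi S) \<noteq> {}" using False downc_sup[of "phi S"] by blast
    ultimately obtain x where x: "x \<in> downc (phi S)" "\<forall>y\<in>downc (phi S). normM Mm (t - x) \<le> normM Mm (t - y)"
      using min_nM by blast
    define W where "W = (1 / norm1 (Mm *v (t - x))) *\<^sub>R (Mm *v (t - x))"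
    have "\<exists>x'. x' \<in> downc (phi S) \<and> (\<forall>y\<in>downc (phi S). normM Mm (t - x') \<le> normM Mm (t - y)) \<and>
        Some x = Some x' \<and> W = (1 / norm1 (Mm *v (t - x'))) *\<^sub>R (Mm *v (t - x'))"
      using x unfolding W_def by blast
    moreover have "\<forall>k. 0 \<le> W $ k" unfolding W_def using w_nonneg[OF x] by blast
    ultimately show ?thesis using False by (intro exI[of _ "Some x"] exI[of _ W]) simp
  qed
  then obtain u w where U: "if phi S = {} then u = tup S \<and> w = wt S
        else (\<exists>x. x \<in> downc (phi S) \<and>
                  (\<forall>y\<in>downc (phi S). normM Mm (t - x) \<le> normM Mm (t - y)) \<and>
                  u = Some x \<and>
                  w = (1 / norm1 (Mm *v (t - x))) *\<^sub>R (Mm *v (t - x)))" and w: "\<forall>k. 0 \<le> w $ k"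
    by blast
  obtain r where r: "r \<in> alg2 X w" using alg2_ne[of w] by blast
  have "\<exists>z. if w \<bullet> r < w \<bullet> tdown S
        then (\<forall>(w',r')\<in>insert (w,r) (lam S). w' \<bullet> z \<le> w' \<bullet> r') \<and>
             (\<forall>z'. (\<forall>(w',r')\<in>insert (w,r) (lam S). w' \<bullet> z' \<le> w' \<bullet> r') \<longrightarrow>
                   normM Mm (t - z) \<le> normM Mm (t - z'))
        else z = tdown S"
  proof (cases "w \<bullet> r < w \<bullet> tdown S")
    case True
    obtain z where "z \<in> Pol (insert (w, r) (lam S))" "\<forall>y\<in>Pol (insert (w, r) (lam S)). normM Mm (t - z) \<le> normM Mm (t - y)"
      using min_nM[OF Pol_closed Pol_ne[OF I w r]] by blast
    then show ?thesis using True unfolding Pol_def by (intro exI[of _ z]) auto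
  qed simp
  then obtain z where Z: "if w \<bullet> r < w \<bullet> tdown S
        then (\<forall>(w',r')\<in>insert (w,r) (lam S). w' \<bullet> z \<le> w' \<bullet> r') \<and>
             (\<forall>z'. (\<forall>(w',r')\<in>insert (w,r) (lam S). w' \<bullet> z' \<le> w' \<bullet> r') \<longrightarrow>
                   normM Mm (t - z) \<le> normM Mm (t - z'))
        else z = tdown S" by blast
  show ?thesis unfolding alg1_step_def
    by (rule exI, rule conjI[OF g], intro exI conjI, rule U, rule r, rule Z, rule refl)
qed

lemma step_phi_ne: "alg1_step X Mm t eps S S' \<Longrightarrow> phi S' \<noteq> {}"
  unfolding alg1_step_def by auto

lemma step_guard: "alg1_step X Mm t eps S S' \<Longrightarrow> alg1_guard Mm eps S"
  unfolding alg1_step_def by auto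

lemma step_term:
  assumes I: "Inv S" and ne: "phi S \<noteq> {}" and st: "alg1_step X Mm t eps S S'" and g: "alg1_guard Mm eps S'"
  shows "card (phi S') = Suc (card (phi S))"
proof -
  obtain u w r z where U: "if phi S = {} then u = tup S \<and> w = wt S
        else (\<exists>x. x \<in> downc (phi S) \<and>
                  (\<forall>y\<in>downc (phi S). normM Mm (t - x) \<le> normM Mm (t - y)) \<and>
                  u = Some x \<and>
                  w = (1 / norm1 (Mm *v (t - x))) *\<^sub>R (Mm *v (t - x)))"
    and r: "r \<in> alg2 X w"
    and Z: "if w \<bullet> r < w \<bullet> tdown S
        then (\<forall>(w',r')\<in>insert (w,r) (lam S). w' \<bullet> z \<le> w' \<bullet> r') \<and>
             (\<forall>z'. (\<forall>(w',r')\<in>insert (w,r) (lam S). w' \<bullet> z' \<le> w' \<bullet> r') \<longrightarrow>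
                   normM Mm (t - z) \<le> normM Mm (t - z'))
        else z = tdown S"
    and S': "S' = \<lparr> tup = u, tdown = z, phi = insert r (phi S), lam = insert (w,r) (lam S), wt = w \<rparr>"
    using st unfolding alg1_step_def by blast
  obtain x where x: "x \<in> downc (phi S)" and xmin: "\<forall>y\<in>downc (phi S). normM Mm (t - x) \<le> normM Mm (t - y)"
    and u: "u = Some x" and wdef: "w = (1 / norm1 (Mm *v (t - x))) *\<^sub>R (Mm *v (t - x))"
    using U ne by auto
  have fin: "finite (phi S)" using I unfolding Inv_def by simp
  have w0: "\<forall>k. 0 \<le> w $ k" using w_nonneg[OF x xmin] wdef by simp
  have xC: "x \<in> Cset X" using x downc_Cset I unfolding Inv_def by blast
  have xP: "x \<in> Pol (lam S)" using Cset_Pol[OF I] xC by blast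
  have tdP: "tdown S \<in> Pol (lam S)" and tdmin: "\<forall>z\<in>Pol (lam S). normM Mm (t - tdown S) \<le> normM Mm (t - z)"
    using I unfolding Inv_def by auto
  have "r \<notin> phi S"
  proof
    assume rin: "r \<in> phi S"
    have "z = x"
    proof (cases "t = x")
      case True
      then have "w = 0" using wdef by simp
      then have "z = tdown S" using Z by simp
      also have "\<dots> = t" using tdown_t[OF I] xC True by simp
      finally show ?thesis using True by simp
    next
      case False
      define c where "c = norm1 (Mm *v (t - x))"
      have c: "c > 0" unfolding c_def using norm1_pos False by simp
      have wc: "w = (1 / c) *\<^sub>R (Mm *v (t - x))" using wdef c_def by simp
      have "(t - x) \<bullet> (Mm *v (r - x)) \<le> 0"
        by (rule variational[OF downc_convex x _ downc_sup[THEN subsetD, OF rin]]) (use xmin in \<open>simp add: nM_le\<close>)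
      moreover have "w \<bullet> (r - x) = (1 / c) * ((t - x) \<bullet> (Mm *v (r - x)))"
        unfolding wc by (simp add: symm[of "t - x"] inner_commute)
      ultimately have "w \<bullet> r - w \<bullet> x \<le> 0" using c
        by (simp add: inner_diff_right divide_nonpos_pos)
      then have wrx: "w \<bullet> r \<le> w \<bullet> x" by simp
      have wxr: "w \<bullet> x \<le> w \<bullet> r" using Cset_le[of w r x] w0 r xC by blast
      have xP': "x \<in> Pol (insert (w, r) (lam S))" using xP wxr unfolding Pol_insert by blast
      show ?thesis
      proof (cases "w \<bullet> r < w \<bullet> tdown S")
        case True
        then have zP: "z \<in> Pol (insert (w, r) (lam S))" and zmin: "\<forall>z'\<in>Pol (insert (w, r) (lam S)). normM Mm (t - z) \<le> normM Mm (t - z')"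
          using Z unfolding Pol_def by auto
        have "q (t - z) \<le> q (t - x)" using zmin xP' by (simp add: nM_le)
        moreover have "w \<bullet> z \<le> w \<bullet> x" using zP wrx unfolding Pol_insert by auto
        then have "q (t - x) + q (x - z) \<le> q (t - z)" by (rule halfspace[OF c wc])
        ultimately have "q (x - z) \<le> 0" by linarith
        then have "q (x - z) = 0" using q_nonneg[of "x - z"] by linarith
        then show ?thesis by (simp add: q_zero)
      next
        case False
        then have zt: "z = tdown S" using Z by simp
        have "q (t - z) \<le> q (t - x)" using tdmin xP zt by (simp add: nM_le)
        moreover have "w \<bullet> z \<le> w \<bullet> x" using False wrx zt by simp
        then have "q (t - x) + q (x - z) \<le> q (t - z)" by (rule halfspace[OF c wc])
        ultimately have "q (x - z) \<le> 0" by linarith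
        then have "q (x - z) = 0" using q_nonneg[of "x - z"] by linarith
        then show ?thesis by (simp add: q_zero)
      qed
    qed
    then have "\<not> alg1_guard Mm eps S'" using eps unfolding S' u alg1_guard_def by (simp add: normM_def)
    then show False using g by simp
  qed
  then show ?thesis using fin unfolding S' by simp
qed

lemma no_infinite_run:
  "\<nexists>S. S 0 = alg1_init i0 t \<and> (\<forall>n. alg1_step X Mm t eps (S n) (S (Suc n)))"
proof
  assume "\<exists>S. S 0 = alg1_init i0 t \<and> (\<forall>n. alg1_step X Mm t eps (S n) (S (Suc n)))"
  then obtain S where S0: "S 0 = alg1_init i0 t" and St: "\<And>n. alg1_step X Mm t eps (S n) (S (Suc n))" by blast
  have I: "Inv (S n)" for n
    by (induction n) (auto simp: S0 Inv_init intro: step_Inv St)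
  have c: "card (phi (S (Suc n))) \<ge> Suc n" for n
  proof (induction n)
    case 0
    have "phi (S 1) \<noteq> {}" using step_phi_ne[OF St[of 0]] by simp
    moreover have "finite (phi (S 1))" using I[of 1] unfolding Inv_def by simp
    ultimately show ?case by (simp add: card_gt_0_iff Suc_le_eq)
  next
    case (Suc n)
    have "card (phi (S (Suc (Suc n)))) = Suc (card (phi (S (Suc n))))"
      by (rule step_term[OF I step_phi_ne[OF St[of n]] St step_guard[OF St]])
    then show ?case using Suc by simp
  qed
  have "card (phi (S (Suc (card Rset)))) \<le> card Rset"
    using I[of "Suc (card Rset)"] Rset_fin unfolding Inv_def by (auto intro: card_mono)
  then show False using c[of "card Rset"] by simp
qed

lemma reach_props:
  assumes R: "(alg1_step X Mm t eps)\<^sup>*\<^sup>* (alg1_init i0 t) S"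
  shows "(alg1_guard Mm eps S \<longrightarrow> (\<exists>S'. alg1_step X Mm t eps S S')) \<and>
        (case tup S of None \<Rightarrow> True | Some u \<Rightarrow> u \<in> Cset X) \<and>
        (t \<in> Cset X \<longrightarrow> tdown S = t) \<and>
        normM Mm (t - tdown S) \<le> (INF u\<in>Cset X. normM Mm (t - u)) \<and>
        (case tup S of None \<Rightarrow> True
           | Some u \<Rightarrow> (INF v\<in>Cset X. normM Mm (t - v)) \<le> normM Mm (t - u))"
proof -
  have I: "Inv S" by (rule reach_Inv[OF R])
  have tupC: "u \<in> Cset X" if "tup S = Some u" for u
    using I that downc_Cset unfolding Inv_def by blast
  have bdd: "bdd_below ((\<lambda>u. normM Mm (t - u)) ` Cset X)"
    by (rule bdd_belowI[of _ 0]) (auto simp: nM_nonneg)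
  show ?thesis
  proof (intro conjI impI)
    show "alg1_guard Mm eps S \<Longrightarrow> \<exists>S'. alg1_step X Mm t eps S S'" by (rule step_exists[OF I])
    show "case tup S of None \<Rightarrow> True | Some u \<Rightarrow> u \<in> Cset X" using tupC by (auto split: option.split)
    show "t \<in> Cset X \<Longrightarrow> tdown S = t" by (rule tdown_t[OF I])
    show "normM Mm (t - tdown S) \<le> (INF u\<in>Cset X. normM Mm (t - u))"
      using Cset_Pol[OF I] I unfolding Inv_def by (intro cINF_greatest Cset_ne) blast
    show "case tup S of None \<Rightarrow> True | Some u \<Rightarrow> (INF v\<in>Cset X. normM Mm (t - v)) \<le> normM Mm (t - u)"
      using tupC by (auto split: option.split intro!: cINF_lower[OF bdd])
  qed
qed

end


theorem theorem3:
  fixes X :: "('n::finite,'s,'a,'q,'l) inst"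
    and Mm :: "real^('n+'n)^('n+'n)"
    and t :: "real^('n+'n)"
    and eps :: real
    and i0 :: 'n
  assumes agents_wf: "\<forall>i. wf_mdp (ag X i)"
    and tasks_wf: "\<forall>j. wf_dfa (task X j)"
    and reward_finite: "\<forall>i j \<mu>. valid_sched (pmdp X i j) \<mu> \<longrightarrow>
          convergent (\<lambda>n. exp_rew_n (pmdp X i j) (prew X i j (Inl i)) (pdone X j) \<mu> n
                              (m_init (pmdp X i j), []))"
    and M_sym: "transpose Mm = Mm"
    and M_posdef: "\<forall>v. v \<noteq> 0 \<longrightarrow> v \<bullet> (Mm *v v) > 0"
    and eps_nonneg: "eps \<ge> 0"
  shows "(\<nexists>S. S 0 = alg1_init i0 t \<and> (\<forall>n. alg1_step X Mm t eps (S n) (S (Suc n)))) \<and>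
    (\<forall>S. (alg1_step X Mm t eps)\<^sup>*\<^sup>* (alg1_init i0 t) S \<longrightarrow>
        (alg1_guard Mm eps S \<longrightarrow> (\<exists>S'. alg1_step X Mm t eps S S')) \<and>
        (case tup S of None \<Rightarrow> True | Some u \<Rightarrow> u \<in> Cset X) \<and>
        (t \<in> Cset X \<longrightarrow> tdown S = t) \<and>
        normM Mm (t - tdown S) \<le> (INF u\<in>Cset X. normM Mm (t - u)) \<and>
        (case tup S of None \<Rightarrow> True
           | Some u \<Rightarrow> (INF v\<in>Cset X. normM Mm (t - v)) \<le> normM Mm (t - u)))"
proof -
  interpret main X Mm t eps i0
    by unfold_locales (use agents_wf tasks_wf reward_finite M_sym M_posdef eps_nonneg in auto)
  show ?thesis using no_infinite_run reach_props by blast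
qed

end
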